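(* Let $(a:b:c)\in\mathbb{P}^2$ with $(a:b:c)\notin\{(1:\pm1:\pm1)\}\cup\{(1:0:0),(0:1:0),(0:0:1)\}$, and let $X=X_{(a:b:c)}$. If $(a^2-b^2)(a^2-c^2)(b^2-c^2)\neq0$ (equivalently, the blow-up $\widetilde X$ of $X$ along $C_1\cup C_2$ is smooth), then $F_1\cap F_2$ is the only $G$-invariant irreducible curve in $X$. If $(a^2-b^2)(a^2-c^2)(b^2-c^2)=0$ (so $\widetilde X$ is singular), then $X$ contains no $G$-invariant irreducible curves.
   Context: $\mathbb{P}(1,1,2)\times\mathbb{P}(1,1,2)$ has weighted coordinates $(s_1:t_1:w_1)$, $(s_2:t_2:w_2)$ ($s_i,t_i$ of weight 1, $w_i$ of weight 2). Put $q=as_1t_1s_2t_2+\tfrac{b+c}{4}(s_1^2s_2^2+t_1^2t_2^2)+\tfrac{b-c}{4}(s_1^2t_2^2+t_1^2s_2^2)$ and $X_{(a:b:c)}=\{w_1w_2=q\}$; $C_1=\{s_1=t_1=w_2=0\}$, $C_2=\{s_2=t_2=w_1=0\}$; $F_1=\{q=w_1=0\}$, $F_2=\{q=w_2=0\}$ (surfaces in $X$). $G\cong\mathbb{C}^*\rtimes(\mathbb{Z}/2\mathbb{Z})^3$ is the group of automorphisms of $X$ generated by $\tau_1:((s_1:t_1:w_1),(s_2:t_2:w_2))\mapsto((s_2:t_2:w_1),(s_1:t_1:w_2))$, $\tau_2:\mapsto((t_1:s_1:w_1),(t_2:s_2:w_2))$, $\tau_3:\mapsto((s_1:-t_1:w_1),(s_2:-t_2:w_2))$,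 and $\sigma_\lambda:\mapsto((s_1:t_1:\lambda w_1),(s_2:t_2:\lambda^{-1}w_2))$ for $\lambda\in\mathbb{C}^*$. *)

theory Defs
  imports Complex_Main
begin

(* A point of the affine cone over P(1,1,2) x P(1,1,2):
   ((s1:t1:w1),(s2:t2:w2)), weights 1,1,2 in each factor. *)
record pt =
  s1 :: complex
  t1 :: complex
  w1 :: complex
  s2 :: complex
  t2 :: complex
  w2 :: complex

inductive_set polyfun :: "(pt \<Rightarrow> complex) set" where
  pconst: "(\<lambda>_. c) \<in> polyfun"
| ps1: "s1 \<in> polyfun" | pt1: "t1 \<in> polyfun" | pw1: "w1 \<in> polyfun"
| ps2: "s2 \<in> polyfun" | pt2: "t2 \<in> polyfun" | pw2: "w2 \<in> polyfun"
| padd: "f \<in> polyfun \<Longrightarrow> g \<in> polyfun \<Longrightarrow> (\<lambda>x. f x + g x) \<in> polyfun"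
| pmul: "f \<in> polyfun \<Longrightarrow> g \<in> polyfun \<Longrightarrow> (\<lambda>x. f x * g x) \<in> polyfun"

definition qf :: "complex \<Rightarrow> complex \<Rightarrow> complex \<Rightarrow> pt \<Rightarrow> complex" where
  "qf a b c p = a * s1 p * t1 p * s2 p * t2 p
     + (b + c) / 4 * ((s1 p)\<^sup>2 * (s2 p)\<^sup>2 + (t1 p)\<^sup>2 * (t2 p)\<^sup>2)
     + (b - c) / 4 * ((s1 p)\<^sup>2 * (t2 p)\<^sup>2 + (t1 p)\<^sup>2 * (s2 p)\<^sup>2)"

(* the weighted C* x C* action whose orbits are the points of P(1,1,2) x P(1,1,2) *)
definition wscale :: "complex \<Rightarrow> complex \<Rightarrow> pt \<Rightarrow> pt" where
  "wscale l m p = \<lparr>s1 = l * s1 p, t1 = l * t1 p, w1 = l\<^sup>2 * w1 p,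
                    s2 = m * s2 p, t2 = m * t2 p, w2 = m\<^sup>2 * w2 p\<rparr>"

definition saturated :: "pt set \<Rightarrow> bool" where
  "saturated S \<longleftrightarrow> (\<forall>p\<in>S. \<forall>l m. l \<noteq> 0 \<longrightarrow> m \<noteq> 0 \<longrightarrow> wscale l m p \<in> S)"

(* affine cone (minus the two coordinate subspaces) over X_(a:b:c) = {w1 w2 = q} *)
definition Xcone :: "complex \<Rightarrow> complex \<Rightarrow> complex \<Rightarrow> pt set" where
  "Xcone a b c = {p. (s1 p, t1 p, w1 p) \<noteq> (0, 0, 0) \<and> (s2 p, t2 p, w2 p) \<noteq> (0, 0, 0)
                     \<and> w1 p * w2 p = qf a b c p}"

(* Zariski closed subsets of X, represented by their saturated preimages in the cone *)
definition Xclosed :: "complex \<Rightarrow> complex \<Rightarrow> complex \<Rightarrow> pt set \<Rightarrow> bool" where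
  "Xclosed a b c S \<longleftrightarrow> S \<subseteq> Xcone a b c \<and> saturated S \<and>
     (\<exists>P \<subseteq> polyfun. S = {p \<in> Xcone a b c. \<forall>f\<in>P. f p = 0})"

definition Xirreducible :: "complex \<Rightarrow> complex \<Rightarrow> complex \<Rightarrow> pt set \<Rightarrow> bool" where
  "Xirreducible a b c S \<longleftrightarrow> Xclosed a b c S \<and> S \<noteq> {} \<and>
     (\<forall>A B. Xclosed a b c A \<longrightarrow> Xclosed a b c B \<longrightarrow> S = A \<union> B \<longrightarrow> S = A \<or> S = B)"

(* irreducible curve: irreducible closed subset of dimension 1
   (maximal chain of irreducible closed subsets inside it has length exactly 1) *)
definition Xcurve :: "complex \<Rightarrow> complex \<Rightarrow> complex \<Rightarrow> pt set \<Rightarrow> bool" where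
  "Xcurve a b c C \<longleftrightarrow> Xirreducible a b c C \<and>
     (\<exists>Z. Xirreducible a b c Z \<and> Z \<subset> C) \<and>
     \<not> (\<exists>Z1 Z2. Xirreducible a b c Z1 \<and> Xirreducible a b c Z2 \<and> Z1 \<subset> Z2 \<and> Z2 \<subset> C)"

definition tau1 :: "pt \<Rightarrow> pt" where
  "tau1 p = \<lparr>s1 = s2 p, t1 = t2 p, w1 = w1 p, s2 = s1 p, t2 = t1 p, w2 = w2 p\<rparr>"
definition tau2 :: "pt \<Rightarrow> pt" where
  "tau2 p = \<lparr>s1 = t1 p, t1 = s1 p, w1 = w1 p, s2 = t2 p, t2 = s2 p, w2 = w2 p\<rparr>"
definition tau3 :: "pt \<Rightarrow> pt" where
  "tau3 p = \<lparr>s1 = s1 p, t1 = - t1 p, w1 = w1 p, s2 = s2 p, t2 = - t2 p, w2 = w2 p\<rparr>"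
definition sigma :: "complex \<Rightarrow> pt \<Rightarrow> pt" where
  "sigma l p = \<lparr>s1 = s1 p, t1 = t1 p, w1 = l * w1 p, s2 = s2 p, t2 = t2 p, w2 = inverse l * w2 p\<rparr>"

definition Ggens :: "(pt \<Rightarrow> pt) set" where
  "Ggens = {tau1, tau2, tau3} \<union> {sigma l | l. l \<noteq> 0}"

(* the group G generated by the generators (all are invertible with inverses among
   the generators, so the monoid generated is the group) *)
inductive_set Gset :: "(pt \<Rightarrow> pt) set" where
  Gid: "id \<in> Gset"
| Gstep: "g \<in> Ggens \<Longrightarrow> h \<in> Gset \<Longrightarrow> g \<circ> h \<in> Gset"

definition Ginvariant :: "pt set \<Rightarrow> bool" where
  "Ginvariant S \<longleftrightarrow> (\<forall>g\<in>Gset. g ` S = S)"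

definition F12 :: "complex \<Rightarrow> complex \<Rightarrow> complex \<Rightarrow> pt set" where
  "F12 a b c = {p \<in> Xcone a b c. qf a b c p = 0 \<and> w1 p = 0 \<and> w2 p = 0}"

definition proj_eq :: "complex \<times> complex \<times> complex \<Rightarrow> complex \<times> complex \<times> complex \<Rightarrow> bool" where
  "proj_eq u v \<longleftrightarrow> (\<exists>k. k \<noteq> 0 \<and> (case v of (x, y, z) \<Rightarrow> u = (k * x, k * y, k * z)))"

end

theory Submission
  imports Defs "HOL-Computational_Algebra.Polynomial"
begin


lemma pt_eqI: "s1 p = s1 q \<Longrightarrow> t1 p = t1 q \<Longrightarrow> w1 p = w1 q \<Longrightarrow> s2 p = s2 q \<Longrightarrow> t2 p = t2 q \<Longrightarrow> w2 p = w2 q \<Longrightarrow> more p = more q \<Longrightarrow> p = (q::pt)"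
  by (cases p, cases q) auto

lemma polyfun_diff: "f \<in> polyfun \<Longrightarrow> g \<in> polyfun \<Longrightarrow> (\<lambda>x. f x - g x) \<in> polyfun"
proof -
  assume f: "f \<in> polyfun" and g: "g \<in> polyfun"
  have "(\<lambda>x. (-1) * g x) \<in> polyfun" by (rule pmul[OF pconst g])
  from padd[OF f this] show ?thesis by simp
qed

lemma polyfun_pow: "f \<in> polyfun \<Longrightarrow> (\<lambda>x. f x ^ n) \<in> polyfun"
proof (induction n)
  case 0 then show ?case using pconst[of 1] by simp
next
  case (Suc n) then show ?case using pmul[OF Suc.prems Suc.IH] by (simp add: mult.commute)
qed

lemma polyfun_cmul: "f \<in> polyfun \<Longrightarrow> (\<lambda>x. c * f x) \<in> polyfun"
  by (rule pmul[OF pconst])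

lemma qf_polyfun: "qf a b c \<in> polyfun"
  unfolding qf_def
  by (intro padd pmul pconst polyfun_pow ps1 pt1 ps2 pt2)

definition orb :: "pt \<Rightarrow> pt set" where
  "orb p = {wscale l m p | l m. l \<noteq> 0 \<and> m \<noteq> 0}"

lemma wscale_sel[simp]:
  "s1 (wscale l m p) = l * s1 p" "t1 (wscale l m p) = l * t1 p" "w1 (wscale l m p) = l\<^sup>2 * w1 p"
  "s2 (wscale l m p) = m * s2 p" "t2 (wscale l m p) = m * t2 p" "w2 (wscale l m p) = m\<^sup>2 * w2 p"
  by (simp_all add: wscale_def)

lemma wscale_more[simp]: "more (wscale l m p) = ()" by (simp add: wscale_def)

lemma wscale_comp: "wscale l m (wscale l' m' p) = wscale (l*l') (m*m') p"
  by (simp add: wscale_def power_mult_distrib)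

lemma wscale_11: "more p = () \<Longrightarrow> wscale 1 1 p = p"
  by (rule pt_eqI) auto

lemma qf_wscale: "qf a b c (wscale l m p) = l\<^sup>2 * m\<^sup>2 * qf a b c p"
  by (simp add: qf_def power2_eq_square algebra_simps)

lemma Xcone_wscale: "p \<in> Xcone a b c \<Longrightarrow> l \<noteq> 0 \<Longrightarrow> m \<noteq> 0 \<Longrightarrow> wscale l m p \<in> Xcone a b c"
  unfolding Xcone_def by (simp add: qf_wscale power2_eq_square algebra_simps)

lemma saturatedD: "saturated S \<Longrightarrow> p \<in> S \<Longrightarrow> l \<noteq> 0 \<Longrightarrow> m \<noteq> 0 \<Longrightarrow> wscale l m p \<in> S"
  unfolding saturated_def by blast

lemma orb_subset: "saturated S \<Longrightarrow> p \<in> S \<Longrightarrow> orb p \<subseteq> S"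
  unfolding orb_def by (auto intro: saturatedD)

lemma orb_self: "more p = () \<Longrightarrow> p \<in> orb p"
  unfolding orb_def by (rule CollectI, rule exI[of _ 1], rule exI[of _ 1]) (simp add: wscale_11)

lemma orb_sym: "q \<in> orb p \<Longrightarrow> more p = () \<Longrightarrow> p \<in> orb q"
proof -
  assume "q \<in> orb p" "more p = ()"
  then obtain l m where lm: "q = wscale l m p" "l \<noteq> 0" "m \<noteq> 0" unfolding orb_def by blast
  then have "p = wscale (1/l) (1/m) q" using \<open>more p = ()\<close> by (simp add: wscale_comp wscale_11)
  then show ?thesis using lm unfolding orb_def by force
qed

lemma Xclosed_sat: "Xclosed a b c S \<Longrightarrow> saturated S" by (simp add: Xclosed_def)
lemma Xclosed_sub: "Xclosed a b c S \<Longrightarrow> S \<subseteq> Xcone a b c" by (simp add: Xclosed_def)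

lemma XclosedE:
  assumes "Xclosed a b c S"
  obtains P where "P \<subseteq> polyfun" "S = {p \<in> Xcone a b c. \<forall>f\<in>P. f p = 0}"
  using assms unfolding Xclosed_def by blast

lemma Xclosed_Int:
  assumes A: "Xclosed a b c A" and B: "Xclosed a b c B" shows "Xclosed a b c (A \<inter> B)"
proof -
  obtain P where P: "P \<subseteq> polyfun" "A = {p \<in> Xcone a b c. \<forall>f\<in>P. f p = 0}" using A by (rule XclosedE)
  obtain Q where Q: "Q \<subseteq> polyfun" "B = {p \<in> Xcone a b c. \<forall>f\<in>Q. f p = 0}" using B by (rule XclosedE)
  have eq: "A \<inter> B = {p \<in> Xcone a b c. \<forall>f\<in>P \<union> Q. f p = 0}" using P Q by auto
  have sat: "saturated (A \<inter> B)" using Xclosed_sat[OF A] Xclosed_sat[OF B]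
    unfolding saturated_def by (simp add: Ball_def)
  have sub: "A \<inter> B \<subseteq> Xcone a b c" using P by auto
  show ?thesis unfolding Xclosed_def
    by (intro conjI sub sat exI[of _ "P \<union> Q"]) (use P Q eq in auto)
qed

lemma Xclosed_Un:
  assumes A: "Xclosed a b c A" and B: "Xclosed a b c B" shows "Xclosed a b c (A \<union> B)"
proof -
  obtain P where P: "P \<subseteq> polyfun" "A = {p \<in> Xcone a b c. \<forall>f\<in>P. f p = 0}" using A by (rule XclosedE)
  obtain Q where Q: "Q \<subseteq> polyfun" "B = {p \<in> Xcone a b c. \<forall>f\<in>Q. f p = 0}" using B by (rule XclosedE)
  define R where "R = {(\<lambda>x. f x * g x) | f g. f \<in> P \<and> g \<in> Q}"
  have R: "R \<subseteq> polyfun" using P Q unfolding R_def by (auto intro: pmul)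
  have "A \<union> B = {p \<in> Xcone a b c. \<forall>h\<in>R. h p = 0}"
  proof safe
    fix p h assume "p \<in> A" "h \<in> R" then show "h p = 0" using P unfolding R_def by auto
  next
    fix p h assume "p \<in> B" "h \<in> R" then show "h p = 0" using Q unfolding R_def by auto
  next
    fix p assume "p \<in> A" then show "p \<in> Xcone a b c" using P by auto
  next
    fix p assume "p \<in> B" then show "p \<in> Xcone a b c" using Q by auto
  next
    fix p assume p: "p \<in> Xcone a b c" "\<forall>h\<in>R. h p = 0" "p \<notin> B"
    then obtain g where g: "g \<in> Q" "g p \<noteq> 0" using Q by auto
    show "p \<in> A" unfolding P(2)
    proof (safe intro!: p(1))
      fix f assume "f \<in> P"
      then have "(\<lambda>x. f x * g x) \<in> R" using g unfolding R_def by auto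
      then show "f p = 0" using p g by auto
    qed
  qed
  moreover have "saturated (A \<union> B)" using Xclosed_sat[OF A] Xclosed_sat[OF B]
    unfolding saturated_def by (simp add: Ball_def)
  moreover have "A \<union> B \<subseteq> Xcone a b c" using Xclosed_sub[OF A] Xclosed_sub[OF B] by blast
  ultimately show ?thesis using R unfolding Xclosed_def by (intro conjI exI[of _ R]) auto
qed

lemma Xclosed_zero:
  assumes A: "Xclosed a b c A" and f: "f \<in> polyfun"
    and hom: "\<And>x l m. x \<in> A \<Longrightarrow> f x = 0 \<Longrightarrow> l \<noteq> 0 \<Longrightarrow> m \<noteq> 0 \<Longrightarrow> f (wscale l m x) = 0"
  shows "Xclosed a b c (A \<inter> {x. f x = 0})"
proof -
  obtain P where P: "P \<subseteq> polyfun" "A = {p \<in> Xcone a b c. \<forall>f\<in>P. f p = 0}" using A by (rule XclosedE)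
  have eq: "A \<inter> {x. f x = 0} = {p \<in> Xcone a b c. \<forall>g\<in>insert f P. g p = 0}" using P by auto
  have sat: "saturated (A \<inter> {x. f x = 0})" using Xclosed_sat[OF A] hom
    unfolding saturated_def by (simp add: Ball_def)
  have sub: "A \<inter> {x. f x = 0} \<subseteq> Xcone a b c" using P by auto
  show ?thesis unfolding Xclosed_def
    by (intro conjI sub sat exI[of _ "insert f P"]) (use P f eq in auto)
qed


lemma more_unit[simp]: "more (p::pt) = ()" by simp

lemma pf_lin: "(\<lambda>x. s1 x * c1 - t1 x * c2) \<in> polyfun"
  by (intro polyfun_diff pmul ps1 pt1 pconst)

lemma fac1:
  assumes "(s1 p, t1 p, w1 p) \<noteq> (0,0,0)"
  shows "\<exists>P \<subseteq> polyfun. \<forall>x. (s1 x, t1 x, w1 x) \<noteq> (0,0,0) \<longrightarrow>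
     ((\<forall>f\<in>P. f x = 0) \<longleftrightarrow> (\<exists>l. l \<noteq> 0 \<and> s1 x = l * s1 p \<and> t1 x = l * t1 p \<and> w1 x = l\<^sup>2 * w1 p))"
proof (cases "s1 p \<noteq> 0")
  case True
  let ?P = "{(\<lambda>x. s1 x * t1 p - t1 x * s1 p), (\<lambda>x. (s1 x)^2 * w1 p - w1 x * (s1 p)^2)}"
  have "?P \<subseteq> polyfun" by (auto intro!: polyfun_diff pmul ps1 pt1 pw1 pconst polyfun_pow)
  moreover have "\<forall>x. (s1 x, t1 x, w1 x) \<noteq> (0,0,0) \<longrightarrow>
     ((\<forall>f\<in>?P. f x = 0) \<longleftrightarrow> (\<exists>l. l \<noteq> 0 \<and> s1 x = l * s1 p \<and> t1 x = l * t1 p \<and> w1 x = l\<^sup>2 * w1 p))"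
  proof (intro allI impI iffI)
    fix x assume nz: "(s1 x, t1 x, w1 x) \<noteq> (0,0,0)" and h: "\<forall>f\<in>?P. f x = 0"
    define l where "l = s1 x / s1 p"
    have e1: "s1 x * t1 p = t1 x * s1 p" "(s1 x)^2 * w1 p = w1 x * (s1 p)^2" using h by auto
    have s: "s1 x = l * s1 p" using True by (simp add: l_def)
    have t: "t1 x = l * t1 p" using True e1(1) by (simp add: l_def field_simps)
    have w: "w1 x = l\<^sup>2 * w1 p" using True e1(2) by (simp add: l_def field_simps)
    have "l \<noteq> 0" using nz s t w by auto
    then show "\<exists>l. l \<noteq> 0 \<and> s1 x = l * s1 p \<and> t1 x = l * t1 p \<and> w1 x = l\<^sup>2 * w1 p" using s t w by blast
  next
    fix x assume "\<exists>l. l \<noteq> 0 \<and> s1 x = l * s1 p \<and> t1 x = l * t1 p \<and> w1 x = l\<^sup>2 * w1 p"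
    then show "\<forall>f\<in>?P. f x = 0" by (auto simp: power2_eq_square)
  qed
  ultimately show ?thesis by blast
next
  case False
  show ?thesis
  proof (cases "t1 p \<noteq> 0")
    case True
    let ?P = "{(\<lambda>x. s1 x * t1 p - t1 x * s1 p), (\<lambda>x. (t1 x)^2 * w1 p - w1 x * (t1 p)^2)}"
    have "?P \<subseteq> polyfun" by (auto intro!: polyfun_diff pmul ps1 pt1 pw1 pconst polyfun_pow)
    moreover have "\<forall>x. (s1 x, t1 x, w1 x) \<noteq> (0,0,0) \<longrightarrow>
       ((\<forall>f\<in>?P. f x = 0) \<longleftrightarrow> (\<exists>l. l \<noteq> 0 \<and> s1 x = l * s1 p \<and> t1 x = l * t1 p \<and> w1 x = l\<^sup>2 * w1 p))"
    proof (intro allI impI iffI)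
      fix x assume nz: "(s1 x, t1 x, w1 x) \<noteq> (0,0,0)" and h: "\<forall>f\<in>?P. f x = 0"
      define l where "l = t1 x / t1 p"
      have e1: "s1 x * t1 p = t1 x * s1 p" "(t1 x)^2 * w1 p = w1 x * (t1 p)^2" using h by auto
      have t: "t1 x = l * t1 p" using True by (simp add: l_def)
      have s: "s1 x = l * s1 p" using True False e1(1) by (simp add: l_def field_simps)
      have w: "w1 x = l\<^sup>2 * w1 p" using True e1(2) by (simp add: l_def field_simps)
      have "l \<noteq> 0" using nz s t w by auto
      then show "\<exists>l. l \<noteq> 0 \<and> s1 x = l * s1 p \<and> t1 x = l * t1 p \<and> w1 x = l\<^sup>2 * w1 p" using s t w by blast
    next
      fix x assume "\<exists>l. l \<noteq> 0 \<and> s1 x = l * s1 p \<and> t1 x = l * t1 p \<and> w1 x = l\<^sup>2 * w1 p"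
      then show "\<forall>f\<in>?P. f x = 0" by (auto simp: power2_eq_square)
    qed
    ultimately show ?thesis by blast
  next
    case F2: False
    have wp: "w1 p \<noteq> 0" using assms False F2 by auto
    let ?P = "{s1, t1}"
    have "?P \<subseteq> polyfun" by (auto intro!: ps1 pt1)
    moreover have "\<forall>x. (s1 x, t1 x, w1 x) \<noteq> (0,0,0) \<longrightarrow>
       ((\<forall>f\<in>?P. f x = 0) \<longleftrightarrow> (\<exists>l. l \<noteq> 0 \<and> s1 x = l * s1 p \<and> t1 x = l * t1 p \<and> w1 x = l\<^sup>2 * w1 p))"
    proof (intro allI impI iffI)
      fix x assume nz: "(s1 x, t1 x, w1 x) \<noteq> (0,0,0)" and h: "\<forall>f\<in>?P. f x = 0"
      define l where "l = csqrt (w1 x / w1 p)"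
      have "w1 x \<noteq> 0" using nz h by auto
      have w: "w1 x = l\<^sup>2 * w1 p" using wp by (simp add: l_def)
      have "l \<noteq> 0" using w \<open>w1 x \<noteq> 0\<close> by auto
      then show "\<exists>l. l \<noteq> 0 \<and> s1 x = l * s1 p \<and> t1 x = l * t1 p \<and> w1 x = l\<^sup>2 * w1 p"
        using w h False F2 by auto
    next
      fix x assume "\<exists>l. l \<noteq> 0 \<and> s1 x = l * s1 p \<and> t1 x = l * t1 p \<and> w1 x = l\<^sup>2 * w1 p"
      then show "\<forall>f\<in>?P. f x = 0" using False F2 by auto
    qed
    ultimately show ?thesis by blast
  qed
qed

lemma fac2:
  assumes "(s2 p, t2 p, w2 p) \<noteq> (0,0,0)"
  shows "\<exists>P \<subseteq> polyfun. \<forall>x. (s2 x, t2 x, w2 x) \<noteq> (0,0,0) \<longrightarrow>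
     ((\<forall>f\<in>P. f x = 0) \<longleftrightarrow> (\<exists>l. l \<noteq> 0 \<and> s2 x = l * s2 p \<and> t2 x = l * t2 p \<and> w2 x = l\<^sup>2 * w2 p))"
proof (cases "s2 p \<noteq> 0")
  case True
  let ?P = "{(\<lambda>x. s2 x * t2 p - t2 x * s2 p), (\<lambda>x. (s2 x)^2 * w2 p - w2 x * (s2 p)^2)}"
  have "?P \<subseteq> polyfun" by (auto intro!: polyfun_diff pmul ps2 pt2 pw2 pconst polyfun_pow)
  moreover have "\<forall>x. (s2 x, t2 x, w2 x) \<noteq> (0,0,0) \<longrightarrow>
     ((\<forall>f\<in>?P. f x = 0) \<longleftrightarrow> (\<exists>l. l \<noteq> 0 \<and> s2 x = l * s2 p \<and> t2 x = l * t2 p \<and> w2 x = l\<^sup>2 * w2 p))"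
  proof (intro allI impI iffI)
    fix x assume nz: "(s2 x, t2 x, w2 x) \<noteq> (0,0,0)" and h: "\<forall>f\<in>?P. f x = 0"
    define l where "l = s2 x / s2 p"
    have e1: "s2 x * t2 p = t2 x * s2 p" "(s2 x)^2 * w2 p = w2 x * (s2 p)^2" using h by auto
    have s: "s2 x = l * s2 p" using True by (simp add: l_def)
    have t: "t2 x = l * t2 p" using True e1(1) by (simp add: l_def field_simps)
    have w: "w2 x = l\<^sup>2 * w2 p" using True e1(2) by (simp add: l_def field_simps)
    have "l \<noteq> 0" using nz s t w by auto
    then show "\<exists>l. l \<noteq> 0 \<and> s2 x = l * s2 p \<and> t2 x = l * t2 p \<and> w2 x = l\<^sup>2 * w2 p" using s t w by blast
  next
    fix x assume "\<exists>l. l \<noteq> 0 \<and> s2 x = l * s2 p \<and> t2 x = l * t2 p \<and> w2 x = l\<^sup>2 * w2 p"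
    then show "\<forall>f\<in>?P. f x = 0" by (auto simp: power2_eq_square)
  qed
  ultimately show ?thesis by blast
next
  case False
  show ?thesis
  proof (cases "t2 p \<noteq> 0")
    case True
    let ?P = "{(\<lambda>x. s2 x * t2 p - t2 x * s2 p), (\<lambda>x. (t2 x)^2 * w2 p - w2 x * (t2 p)^2)}"
    have "?P \<subseteq> polyfun" by (auto intro!: polyfun_diff pmul ps2 pt2 pw2 pconst polyfun_pow)
    moreover have "\<forall>x. (s2 x, t2 x, w2 x) \<noteq> (0,0,0) \<longrightarrow>
       ((\<forall>f\<in>?P. f x = 0) \<longleftrightarrow> (\<exists>l. l \<noteq> 0 \<and> s2 x = l * s2 p \<and> t2 x = l * t2 p \<and> w2 x = l\<^sup>2 * w2 p))"
    proof (intro allI impI iffI)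
      fix x assume nz: "(s2 x, t2 x, w2 x) \<noteq> (0,0,0)" and h: "\<forall>f\<in>?P. f x = 0"
      define l where "l = t2 x / t2 p"
      have e1: "s2 x * t2 p = t2 x * s2 p" "(t2 x)^2 * w2 p = w2 x * (t2 p)^2" using h by auto
      have t: "t2 x = l * t2 p" using True by (simp add: l_def)
      have s: "s2 x = l * s2 p" using True False e1(1) by (simp add: l_def field_simps)
      have w: "w2 x = l\<^sup>2 * w2 p" using True e1(2) by (simp add: l_def field_simps)
      have "l \<noteq> 0" using nz s t w by auto
      then show "\<exists>l. l \<noteq> 0 \<and> s2 x = l * s2 p \<and> t2 x = l * t2 p \<and> w2 x = l\<^sup>2 * w2 p" using s t w by blast
    next
      fix x assume "\<exists>l. l \<noteq> 0 \<and> s2 x = l * s2 p \<and> t2 x = l * t2 p \<and> w2 x = l\<^sup>2 * w2 p"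
      then show "\<forall>f\<in>?P. f x = 0" by (auto simp: power2_eq_square)
    qed
    ultimately show ?thesis by blast
  next
    case F2: False
    have wp: "w2 p \<noteq> 0" using assms False F2 by auto
    let ?P = "{s2, t2}"
    have "?P \<subseteq> polyfun" by (auto intro!: ps2 pt2)
    moreover have "\<forall>x. (s2 x, t2 x, w2 x) \<noteq> (0,0,0) \<longrightarrow>
       ((\<forall>f\<in>?P. f x = 0) \<longleftrightarrow> (\<exists>l. l \<noteq> 0 \<and> s2 x = l * s2 p \<and> t2 x = l * t2 p \<and> w2 x = l\<^sup>2 * w2 p))"
    proof (intro allI impI iffI)
      fix x assume nz: "(s2 x, t2 x, w2 x) \<noteq> (0,0,0)" and h: "\<forall>f\<in>?P. f x = 0"
      define l where "l = csqrt (w2 x / w2 p)"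
      have "w2 x \<noteq> 0" using nz h by auto
      have w: "w2 x = l\<^sup>2 * w2 p" using wp by (simp add: l_def)
      have "l \<noteq> 0" using w \<open>w2 x \<noteq> 0\<close> by auto
      then show "\<exists>l. l \<noteq> 0 \<and> s2 x = l * s2 p \<and> t2 x = l * t2 p \<and> w2 x = l\<^sup>2 * w2 p"
        using w h False F2 by auto
    next
      fix x assume "\<exists>l. l \<noteq> 0 \<and> s2 x = l * s2 p \<and> t2 x = l * t2 p \<and> w2 x = l\<^sup>2 * w2 p"
      then show "\<forall>f\<in>?P. f x = 0" using False F2 by auto
    qed
    ultimately show ?thesis by blast
  qed
qed

lemma orb_sat: "saturated (orb p)"
  unfolding saturated_def orb_def
  proof (intro ballI allI impI)
    fix x and l m :: complex assume "x \<in> {wscale l m p |l m. l \<noteq> 0 \<and> m \<noteq> 0}" "l \<noteq> 0" "m \<noteq> 0"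
    then obtain l' m' where "x = wscale l' m' p" "l' \<noteq> 0" "m' \<noteq> 0" by blast
    then have "wscale l m x = wscale (l*l') (m*m') p" "l*l' \<noteq> 0" "m*m' \<noteq> 0"
      using \<open>l \<noteq> 0\<close> \<open>m \<noteq> 0\<close> by (auto simp: wscale_comp)
    then show "wscale l m x \<in> {wscale l m p |l m. l \<noteq> 0 \<and> m \<noteq> 0}" by blast
  qed

lemma orb_closed:
  assumes p: "p \<in> Xcone a b c" shows "Xclosed a b c (orb p)"
proof -
  have n1: "(s1 p, t1 p, w1 p) \<noteq> (0,0,0)" and n2: "(s2 p, t2 p, w2 p) \<noteq> (0,0,0)"
    using p by (auto simp: Xcone_def)
  obtain P1 where P1: "P1 \<subseteq> polyfun" "\<forall>x. (s1 x, t1 x, w1 x) \<noteq> (0,0,0) \<longrightarrow>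
     ((\<forall>f\<in>P1. f x = 0) \<longleftrightarrow> (\<exists>l. l \<noteq> 0 \<and> s1 x = l * s1 p \<and> t1 x = l * t1 p \<and> w1 x = l\<^sup>2 * w1 p))"
    using fac1[OF n1] by blast
  obtain P2 where P2: "P2 \<subseteq> polyfun" "\<forall>x. (s2 x, t2 x, w2 x) \<noteq> (0,0,0) \<longrightarrow>
     ((\<forall>f\<in>P2. f x = 0) \<longleftrightarrow> (\<exists>l. l \<noteq> 0 \<and> s2 x = l * s2 p \<and> t2 x = l * t2 p \<and> w2 x = l\<^sup>2 * w2 p))"
    using fac2[OF n2] by blast
  have eq: "orb p = {x \<in> Xcone a b c. \<forall>f\<in>P1 \<union> P2. f x = 0}"
  proof safe
    fix x assume "x \<in> orb p"
    then obtain l m where x: "x = wscale l m p" "l \<noteq> 0" "m \<noteq> 0" unfolding orb_def by blast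
    show "x \<in> Xcone a b c" using Xcone_wscale[OF p x(2,3)] x(1) by simp
    then have "(s1 x, t1 x, w1 x) \<noteq> (0,0,0)" "(s2 x, t2 x, w2 x) \<noteq> (0,0,0)" by (auto simp: Xcone_def)
    have e1: "\<exists>l'. l' \<noteq> 0 \<and> s1 x = l' * s1 p \<and> t1 x = l' * t1 p \<and> w1 x = l'\<^sup>2 * w1 p"
      using x by (intro exI[of _ l]) auto
    have e2: "\<exists>l'. l' \<noteq> 0 \<and> s2 x = l' * s2 p \<and> t2 x = l' * t2 p \<and> w2 x = l'\<^sup>2 * w2 p"
      using x by (intro exI[of _ m]) auto
    {fix f assume "f \<in> P1" then show "f x = 0"
        using P1(2)[rule_format, OF \<open>(s1 x, t1 x, w1 x) \<noteq> (0,0,0)\<close>] e1 by blast}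
    {fix f assume "f \<in> P2" then show "f x = 0"
        using P2(2)[rule_format, OF \<open>(s2 x, t2 x, w2 x) \<noteq> (0,0,0)\<close>] e2 by blast}
  next
    fix x assume x: "x \<in> Xcone a b c" "\<forall>f\<in>P1 \<union> P2. f x = 0"
    then have "(s1 x, t1 x, w1 x) \<noteq> (0,0,0)" "(s2 x, t2 x, w2 x) \<noteq> (0,0,0)" by (auto simp: Xcone_def)
    then obtain l m where l: "l \<noteq> 0" "s1 x = l * s1 p" "t1 x = l * t1 p" "w1 x = l\<^sup>2 * w1 p"
      and m: "m \<noteq> 0" "s2 x = m * s2 p" "t2 x = m * t2 p" "w2 x = m\<^sup>2 * w2 p"
      using P1(2)[rule_format, OF \<open>(s1 x, t1 x, w1 x) \<noteq> (0,0,0)\<close>]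
        P2(2)[rule_format, OF \<open>(s2 x, t2 x, w2 x) \<noteq> (0,0,0)\<close>] x(2) by blast
    have "x = wscale l m p" by (rule pt_eqI) (use l m in auto)
    then show "x \<in> orb p" using l(1) m(1) unfolding orb_def by blast
  qed
  have sat: "saturated (orb p)" by (rule orb_sat)
  have sub: "orb p \<subseteq> Xcone a b c" using eq by blast
  show ?thesis unfolding Xclosed_def
    by (intro conjI sub sat exI[of _ "P1 \<union> P2"]) (use P1 P2 eq in auto)
qed

lemma orb_irred:
  assumes p: "p \<in> Xcone a b c" shows "Xirreducible a b c (orb p)"
  unfolding Xirreducible_def
proof (intro conjI allI impI)
  show "Xclosed a b c (orb p)" by (rule orb_closed[OF p])
  show "orb p \<noteq> {}" using orb_self[of p] by auto
  fix A B assume A: "Xclosed a b c A" and B: "Xclosed a b c B" and e: "orb p = A \<union> B"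
  have "p \<in> A \<union> B" using orb_self[of p] e by auto
  then show "orb p = A \<or> orb p = B"
  proof
    assume "p \<in> A" then have "orb p \<subseteq> A" using orb_subset[OF Xclosed_sat[OF A]] by blast
    then show ?thesis using e by blast
  next
    assume "p \<in> B" then have "orb p \<subseteq> B" using orb_subset[OF Xclosed_sat[OF B]] by blast
    then show ?thesis using e by blast
  qed
qed

lemma sat_sub_orb:
  assumes "saturated Z" "Z \<subseteq> orb e" "Z \<noteq> {}" shows "Z = orb e"
proof -
  obtain z where z: "z \<in> Z" using assms by blast
  then have "z \<in> orb e" using assms by blast
  then have "e \<in> orb z" by (rule orb_sym) simp
  then have "orb e \<subseteq> orb z" using orb_subset[OF orb_sat] by blast
  moreover have "orb z \<subseteq> Z" using orb_subset[OF assms(1) z] .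
  ultimately show ?thesis using assms(2) by blast
qed

lemma XcurveD:
  assumes "Xcurve a b c C"
  shows "Xirreducible a b c C" "\<exists>Z. Xirreducible a b c Z \<and> Z \<subset> C"
    "\<And>Z1 Z2. Xirreducible a b c Z1 \<Longrightarrow> Xirreducible a b c Z2 \<Longrightarrow> Z1 \<subset> Z2 \<Longrightarrow> Z2 \<subset> C \<Longrightarrow> False"
  using assms unfolding Xcurve_def by auto

lemma XirrD:
  assumes "Xirreducible a b c C"
  shows "Xclosed a b c C" "C \<noteq> {}"
    "\<And>A B. Xclosed a b c A \<Longrightarrow> Xclosed a b c B \<Longrightarrow> C = A \<union> B \<Longrightarrow> C = A \<or> C = B"
  using assms unfolding Xirreducible_def by auto

lemma curve_not_orb:
  assumes "Xcurve a b c C" shows "\<not> C \<subseteq> orb e"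
proof
  assume Ce: "C \<subseteq> orb e"
  obtain Z where Z: "Xirreducible a b c Z" "Z \<subset> C" using XcurveD(2)[OF assms] by blast
  have Ci: "Xirreducible a b c C" by (rule XcurveD(1)[OF assms])
  have "C = orb e" by (rule sat_sub_orb[OF Xclosed_sat[OF XirrD(1)[OF Ci]] Ce XirrD(2)[OF Ci]])
  moreover have "Z = orb e" using Z(2) Ce
    by (intro sat_sub_orb[OF Xclosed_sat[OF XirrD(1)[OF Z(1)]] _ XirrD(2)[OF Z(1)]]) auto
  ultimately show False using Z by blast
qed


definition cpoly :: "(complex \<Rightarrow> complex) \<Rightarrow> bool" where
  "cpoly f \<longleftrightarrow> (\<exists>p. \<forall>t. f t = poly p t)"

lemma cpoly_const: "cpoly (\<lambda>t. c)" unfolding cpoly_def by (rule exI[of _ "[:c:]"]) simp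
lemma cpoly_id: "cpoly (\<lambda>t. t)" unfolding cpoly_def by (rule exI[of _ "[:0,1:]"]) simp
lemma cpoly_add: "cpoly f \<Longrightarrow> cpoly g \<Longrightarrow> cpoly (\<lambda>t. f t + g t)"
  unfolding cpoly_def by (metis poly_add)
lemma cpoly_mult: "cpoly f \<Longrightarrow> cpoly g \<Longrightarrow> cpoly (\<lambda>t. f t * g t)"
  unfolding cpoly_def by (metis poly_mult)
lemma cpoly_pow: "cpoly f \<Longrightarrow> cpoly (\<lambda>t. f t ^ n)"
  by (induction n) (simp_all add: cpoly_const cpoly_mult)

definition pc :: "(complex \<Rightarrow> pt) \<Rightarrow> bool" where
  "pc g \<longleftrightarrow> cpoly (\<lambda>t. s1 (g t)) \<and> cpoly (\<lambda>t. t1 (g t)) \<and> cpoly (\<lambda>t. w1 (g t)) \<and>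
            cpoly (\<lambda>t. s2 (g t)) \<and> cpoly (\<lambda>t. t2 (g t)) \<and> cpoly (\<lambda>t. w2 (g t))"

lemma pc_polyfun:
  assumes "f \<in> polyfun" "pc g" shows "cpoly (\<lambda>t. f (g t))"
  using assms(1)
proof induction
  case (pconst c) then show ?case by (simp add: cpoly_const)
next
  case (padd f1 f2) show ?case by (rule cpoly_add[OF padd.IH])
next
  case (pmul f1 f2) show ?case by (rule cpoly_mult[OF pmul.IH])
qed (use assms(2) in \<open>simp_all add: pc_def\<close>)

lemma curve_fin_or_all:
  assumes A: "Xclosed a b c A" and g: "pc g"
  shows "finite {t. g t \<in> A} \<or> (\<forall>t. g t \<in> Xcone a b c \<longrightarrow> g t \<in> A)"
proof -
  obtain P where P: "P \<subseteq> polyfun" "A = {p \<in> Xcone a b c. \<forall>f\<in>P. f p = 0}" using A by (rule XclosedE)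
  show ?thesis
  proof (cases "\<forall>f\<in>P. \<forall>t. f (g t) = 0")
    case True then show ?thesis using P by auto
  next
    case False
    then obtain f t0 where f: "f \<in> P" "f (g t0) \<noteq> 0" by blast
    obtain q where q: "\<forall>t. f (g t) = poly q t" using pc_polyfun[OF _ g, of f] f P unfolding cpoly_def by blast
    have "q \<noteq> 0" using f q by (metis poly_0)
    then have "finite {t. poly q t = 0}" by (rule poly_roots_finite)
    moreover have "{t. g t \<in> A} \<subseteq> {t. poly q t = 0}" using P f q by auto
    ultimately show ?thesis using finite_subset by blast
  qed
qed

lemma infinite_compl_finite: "finite (S::complex set) \<Longrightarrow> infinite (- S)"
  using finite_compl infinite_UNIV_char_0 by blast

lemma curve_limit:
  assumes A: "Xclosed a b c A" and g: "pc g" and g0: "g 0 \<in> Xcone a b c"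
    and nz: "\<And>t. t \<noteq> 0 \<Longrightarrow> g t \<in> A"
  shows "g 0 \<in> A"
proof -
  have "- {0} \<subseteq> {t. g t \<in> A}" using nz by auto
  then have "infinite {t. g t \<in> A}" using infinite_compl_finite[of "{0}"] finite_subset by blast
  then show ?thesis using curve_fin_or_all[OF A g] g0 by blast
qed

lemma irr_curves:
  assumes Z: "Xclosed a b c Z" and g1: "pc g1" and g2: "pc g2"
    and in1: "\<And>u. g1 u \<in> Z" and in2: "\<And>u. g2 u \<in> Z"
    and cover: "\<And>z. z \<in> Z \<Longrightarrow> \<exists>u. z \<in> orb (g1 u) \<or> z \<in> orb (g2 u)"
    and rel: "\<And>u. u \<noteq> 0 \<Longrightarrow> g2 u \<in> orb (g1 (1/u))"
  shows "Xirreducible a b c Z"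
proof -
  have ZX: "Z \<subseteq> Xcone a b c" by (rule Xclosed_sub[OF Z])
  have full: "Z \<subseteq> A" if A: "Xclosed a b c A" and inf: "infinite {t. g1 t \<in> A}" for A
  proof -
    have all1: "g1 t \<in> A" for t using curve_fin_or_all[OF A g1] inf in1 ZX by blast
    have "- {0} \<subseteq> {t. g2 t \<in> A}"
    proof
      fix u assume "u \<in> - {0::complex}"
      then have "g2 u \<in> orb (g1 (1/u))" using rel by auto
      then show "u \<in> {t. g2 t \<in> A}" using orb_subset[OF Xclosed_sat[OF A] all1] by blast
    qed
    then have "infinite {t. g2 t \<in> A}" using infinite_compl_finite[of "{0}"] finite_subset by blast
    then have all2: "g2 t \<in> A" for t using curve_fin_or_all[OF A g2] in2 ZX by blast
    show ?thesis
    proof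
      fix z assume "z \<in> Z"
      then obtain u where "z \<in> orb (g1 u) \<or> z \<in> orb (g2 u)" using cover by blast
      then show "z \<in> A" using orb_subset[OF Xclosed_sat[OF A] all1] orb_subset[OF Xclosed_sat[OF A] all2] by blast
    qed
  qed
  show ?thesis unfolding Xirreducible_def
  proof (intro conjI allI impI)
    show "Xclosed a b c Z" by (rule Z)
    show "Z \<noteq> {}" using in1 by blast
    fix A B assume A: "Xclosed a b c A" and B: "Xclosed a b c B" and e: "Z = A \<union> B"
    have "{t. g1 t \<in> A} \<union> {t. g1 t \<in> B} = UNIV" using e in1 by auto
    then have "infinite {t. g1 t \<in> A} \<or> infinite {t. g1 t \<in> B}"
      by (metis finite_UnI infinite_UNIV_char_0)
    then show "Z = A \<or> Z = B" using full[OF A] full[OF B] e by blast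
  qed
qed


lemma qf_cong:
  "s1 x = l * s1 y \<Longrightarrow> t1 x = l * t1 y \<Longrightarrow> s2 x = m * s2 y \<Longrightarrow> t2 x = m * t2 y \<Longrightarrow>
   qf a b c x = l\<^sup>2 * m\<^sup>2 * qf a b c y"
  by (simp add: qf_def power2_eq_square algebra_simps)

lemma qf_zero1: "s1 x = 0 \<Longrightarrow> t1 x = 0 \<Longrightarrow> qf a b c x = 0"
  by (simp add: qf_def)
lemma qf_zero2: "s2 x = 0 \<Longrightarrow> t2 x = 0 \<Longrightarrow> qf a b c x = 0"
  by (simp add: qf_def)

lemma prop_ex:
  assumes "(s, t) \<noteq> (0::complex, 0)" "s' * t = t' * s"
  shows "\<exists>l. s' = l * s \<and> t' = l * t"
proof (cases "s = 0")
  case True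
  then have "t \<noteq> 0" using assms by auto
  then show ?thesis using assms True by (intro exI[of _ "t'/t"]) (auto simp: field_simps)
next
  case False
  then show ?thesis using assms by (intro exI[of _ "s'/s"]) (auto simp: field_simps)
qed

lemma Ggen: "g \<in> Ggens \<Longrightarrow> g \<in> Gset"
  using Gstep[OF _ Gid, of g] by simp

lemma Ginv_mem: "Ginvariant C \<Longrightarrow> g \<in> Ggens \<Longrightarrow> x \<in> C \<Longrightarrow> g x \<in> C"
  unfolding Ginvariant_def using Ggen by blast

lemma gens: "tau1 \<in> Ggens" "tau2 \<in> Ggens" "tau3 \<in> Ggens" "l \<noteq> 0 \<Longrightarrow> sigma l \<in> Ggens"
  unfolding Ggens_def by auto

lemma tau_sel[simp]:
  "s1 (tau1 p) = s2 p" "t1 (tau1 p) = t2 p" "w1 (tau1 p) = w1 p" "s2 (tau1 p) = s1 p" "t2 (tau1 p) = t1 p" "w2 (tau1 p) = w2 p"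
  "s1 (tau2 p) = t1 p" "t1 (tau2 p) = s1 p" "w1 (tau2 p) = w1 p" "s2 (tau2 p) = t2 p" "t2 (tau2 p) = s2 p" "w2 (tau2 p) = w2 p"
  "s1 (tau3 p) = s1 p" "t1 (tau3 p) = - t1 p" "w1 (tau3 p) = w1 p" "s2 (tau3 p) = s2 p" "t2 (tau3 p) = - t2 p" "w2 (tau3 p) = w2 p"
  "s1 (sigma l p) = s1 p" "t1 (sigma l p) = t1 p" "w1 (sigma l p) = l * w1 p" "s2 (sigma l p) = s2 p" "t2 (sigma l p) = t2 p" "w2 (sigma l p) = inverse l * w2 p"
  by (simp_all add: tau1_def tau2_def tau3_def sigma_def)

lemma XconeD: "p \<in> Xcone a b c \<Longrightarrow> (s1 p, t1 p, w1 p) \<noteq> (0,0,0) \<and> (s2 p, t2 p, w2 p) \<noteq> (0,0,0) \<and> w1 p * w2 p = qf a b c p"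
  by (simp add: Xcone_def)

lemma XconeI: "(s1 p, t1 p, w1 p) \<noteq> (0,0,0) \<Longrightarrow> (s2 p, t2 p, w2 p) \<noteq> (0,0,0) \<Longrightarrow> w1 p * w2 p = qf a b c p \<Longrightarrow> p \<in> Xcone a b c"
  by (simp add: Xcone_def)

lemma pairs_nz:
  assumes G: "Ginvariant C" and CX: "C \<subseteq> Xcone a b c" and p: "p \<in> C"
  shows "(s1 p, t1 p) \<noteq> (0,0)" "(s2 p, t2 p) \<noteq> (0,0)"
proof -
  have pX: "p \<in> Xcone a b c" using p CX by blast
  have tX: "tau1 p \<in> Xcone a b c" using Ginv_mem[OF G gens(1) p] CX by blast
  show "(s1 p, t1 p) \<noteq> (0,0)"
  proof
    assume z: "(s1 p, t1 p) = (0,0)"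
    then have "w1 p \<noteq> 0" using XconeD[OF pX] by auto
    moreover have "w1 p * w2 p = 0" using XconeD[OF pX] qf_zero1[of p] z by auto
    ultimately have "w2 p = 0" by simp
    then show False using XconeD[OF tX] z by simp
  qed
  show "(s2 p, t2 p) \<noteq> (0,0)"
  proof
    assume z: "(s2 p, t2 p) = (0,0)"
    then have "w2 p \<noteq> 0" using XconeD[OF pX] by auto
    moreover have "w1 p * w2 p = 0" using XconeD[OF pX] qf_zero2[of p] z by auto
    ultimately have "w1 p = 0" by simp
    then show False using XconeD[OF tX] z by simp
  qed
qed

lemma Xclosed_Xcone: "Xclosed a b c (Xcone a b c)"
  unfolding Xclosed_def saturated_def
  by (intro conjI ballI allI impI exI[of _ "{}"]) (auto intro: Xcone_wscale)

lemma stepA_core: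
  assumes C: "Xcurve a b c C" and G: "Ginvariant C" and Z: "Xirreducible a b c Z" and ZC: "Z \<subseteq> C"
    and pZ: "p \<in> Z" and dZ: "d \<in> Z" and d: "d \<notin> orb p" and pX: "p \<in> Xcone a b c"
    and Zeq: "\<And>x. x \<in> Z \<Longrightarrow> s1 x * t1 p = t1 x * s1 p" and nz: "(s1 p, t1 p) \<noteq> (0,0)"
  shows False
proof -
  have "orb p \<subseteq> Z" using orb_subset[OF Xclosed_sat[OF XirrD(1)[OF Z]] pZ] .
  then have ps: "orb p \<subset> Z" using dZ d by blast
  have "Z = C"
  proof (rule ccontr)
    assume "Z \<noteq> C"
    then have "Z \<subset> C" using ZC by blast
    then show False using XcurveD(3)[OF C orb_irred[OF pX] Z ps] by blast
  qed
  have "tau2 p \<in> Z" "tau3 p \<in> Z" using Ginv_mem[OF G gens(2)] Ginv_mem[OF G gens(3)] pZ ZC \<open>Z = C\<close> by auto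
  from Zeq[OF this(1)] Zeq[OF this(2)]
  have "t1 p * t1 p = s1 p * s1 p" "s1 p * t1 p = - t1 p * s1 p" by auto
  then have "s1 p * t1 p = 0" "t1 p * t1 p = s1 p * s1 p" by auto
  then show False using nz by auto
qed

lemma curveX: "Xcurve a b c C \<Longrightarrow> C \<subseteq> Xcone a b c"
  using Xclosed_sub[OF XirrD(1)[OF XcurveD(1)]] by blast

lemma csqrt_sq: "w \<noteq> 0 \<Longrightarrow> (csqrt (v / w))\<^sup>2 * w = v"
  by simp

lemma stepA_case1:
  assumes C: "Xcurve a b c C" and G: "Ginvariant C" and pC: "p \<in> C"
    and w1p: "w1 p \<noteq> 0" and w2p: "w2 p \<noteq> 0"
  shows False
proof -
  have CX: "C \<subseteq> Xcone a b c" by (rule curveX[OF C])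
  have pX: "p \<in> Xcone a b c" using pC CX by blast
  have nz1: "(s1 p, t1 p) \<noteq> (0,0)" and nz2: "(s2 p, t2 p) \<noteq> (0,0)" using pairs_nz[OF G CX pC] by auto
  have qp: "w1 p * w2 p = qf a b c p" using XconeD[OF pX] by simp
  define Z where "Z = Xcone a b c \<inter> {x. s1 x * t1 p - t1 x * s1 p = 0} \<inter> {x. s2 x * t2 p - t2 x * s2 p = 0}"
  have Zc: "Xclosed a b c Z" unfolding Z_def
    by (intro Xclosed_zero Xclosed_Xcone polyfun_diff pmul ps1 pt1 ps2 pt2 pconst)
       (simp_all add: mult.assoc flip: right_diff_distrib)
  define g1 where "g1 u = \<lparr>s1 = u * s1 p, t1 = u * t1 p, w1 = w1 p, s2 = s2 p, t2 = t2 p, w2 = u\<^sup>2 * w2 p\<rparr>" for u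
  define g2 where "g2 u = \<lparr>s1 = s1 p, t1 = t1 p, w1 = u\<^sup>2 * w1 p, s2 = u * s2 p, t2 = u * t2 p, w2 = w2 p\<rparr>" for u
  have pc1: "pc g1" unfolding pc_def g1_def by (simp, intro conjI cpoly_mult cpoly_pow cpoly_id cpoly_const)
  have pc2: "pc g2" unfolding pc_def g2_def by (simp, intro conjI cpoly_mult cpoly_pow cpoly_id cpoly_const)
  have g1X: "g1 u \<in> Xcone a b c" for u
  proof (rule XconeI)
    have "qf a b c (g1 u) = u\<^sup>2 * 1\<^sup>2 * qf a b c p" by (rule qf_cong) (simp_all add: g1_def)
    then show "w1 (g1 u) * w2 (g1 u) = qf a b c (g1 u)" using qp by (simp add: g1_def algebra_simps)
  qed (use w1p nz2 in \<open>auto simp: g1_def\<close>)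
  have g2X: "g2 u \<in> Xcone a b c" for u
  proof (rule XconeI)
    have "qf a b c (g2 u) = 1\<^sup>2 * u\<^sup>2 * qf a b c p" by (rule qf_cong) (simp_all add: g2_def)
    then show "w1 (g2 u) * w2 (g2 u) = qf a b c (g2 u)" using qp by (simp add: g2_def algebra_simps)
  qed (use w2p nz1 in \<open>auto simp: g2_def\<close>)
  have in1: "g1 u \<in> Z" for u using g1X by (simp add: Z_def g1_def algebra_simps)
  have in2: "g2 u \<in> Z" for u using g2X by (simp add: Z_def g2_def algebra_simps)
  have rel: "g2 u \<in> orb (g1 (1/u))" if "u \<noteq> 0" for u
  proof -
    have "g2 u = wscale u u (g1 (1/u))"
      by (rule pt_eqI) (use that in \<open>simp_all add: g1_def g2_def power2_eq_square field_simps\<close>)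
    then show ?thesis using that unfolding orb_def by blast
  qed
  have cover: "\<exists>u. z \<in> orb (g1 u) \<or> z \<in> orb (g2 u)" if zZ: "z \<in> Z" for z
  proof -
    have zX: "z \<in> Xcone a b c" and e1: "s1 z * t1 p = t1 z * s1 p" and e2: "s2 z * t2 p = t2 z * s2 p"
      using zZ by (auto simp: Z_def)
    obtain la where la: "s1 z = la * s1 p" "t1 z = la * t1 p" using prop_ex[OF nz1 e1] by blast
    obtain mu where mu: "s2 z = mu * s2 p" "t2 z = mu * t2 p" using prop_ex[OF nz2 e2] by blast
    have qz: "w1 z * w2 z = la\<^sup>2 * mu\<^sup>2 * (w1 p * w2 p)"
      using XconeD[OF zX] qf_cong[OF la mu, of a b c] qp by simp
    have n1: "(s1 z, t1 z, w1 z) \<noteq> (0,0,0)" and n2: "(s2 z, t2 z, w2 z) \<noteq> (0,0,0)" using XconeD[OF zX] by auto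
    show ?thesis
    proof (cases "la = 0")
      case True
      then have "w1 z \<noteq> 0" using n1 la by auto
      then have w2z: "w2 z = 0" using qz True by simp
      then have "mu \<noteq> 0" using n2 mu by auto
      define l where "l = csqrt (w1 z / w1 p)"
      have l2: "l\<^sup>2 * w1 p = w1 z" using w1p by (simp add: l_def)
      have "l \<noteq> 0" using l2 \<open>w1 z \<noteq> 0\<close> by auto
      have "z = wscale l mu (g1 0)"
        by (rule pt_eqI) (use la mu True l2 w2z in \<open>simp_all add: g1_def\<close>)
      then show ?thesis using \<open>l \<noteq> 0\<close> \<open>mu \<noteq> 0\<close> unfolding orb_def by blast
    next
      case la0: False
      show ?thesis
      proof (cases "mu = 0")
        case True
        then have "w2 z \<noteq> 0" using n2 mu by auto
        then have w1z: "w1 z = 0" using qz True by simp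
        define m where "m = csqrt (w2 z / w2 p)"
        have m2: "m\<^sup>2 * w2 p = w2 z" using w2p by (simp add: m_def)
        have "m \<noteq> 0" using m2 \<open>w2 z \<noteq> 0\<close> by auto
        have "z = wscale la m (g2 0)"
          by (rule pt_eqI) (use la mu True m2 w1z in \<open>simp_all add: g2_def\<close>)
        then show ?thesis using \<open>m \<noteq> 0\<close> la0 unfolding orb_def by blast
      next
        case mu0: False
        have "w1 z \<noteq> 0" using qz la0 mu0 w1p w2p by auto
        define l where "l = csqrt (w1 z / w1 p)"
        have l2: "l\<^sup>2 * w1 p = w1 z" using w1p by (simp add: l_def)
        have "l \<noteq> 0" using l2 \<open>w1 z \<noteq> 0\<close> by auto
        have w2z: "w2 z = mu\<^sup>2 * (la / l)\<^sup>2 * w2 p"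
        proof -
          have "w1 z * w2 z = w1 z * (mu\<^sup>2 * (la / l)\<^sup>2 * w2 p)"
            using qz l2 \<open>l \<noteq> 0\<close> by (simp add: field_simps power2_eq_square)
          then show ?thesis using \<open>w1 z \<noteq> 0\<close> by simp
        qed
        have "z = wscale l mu (g1 (la / l))"
          by (rule pt_eqI) (use la mu l2 w2z \<open>l \<noteq> 0\<close> in \<open>simp_all add: g1_def\<close>)
        then show ?thesis using \<open>l \<noteq> 0\<close> mu0 unfolding orb_def by blast
      qed
    qed
  qed
  have Zirr: "Xirreducible a b c Z" by (rule irr_curves[OF Zc pc1 pc2 in1 in2 cover rel])
  have Cc: "Xclosed a b c C" by (rule XirrD(1)[OF XcurveD(1)[OF C]])
  have C1: "g1 u \<in> C" for u
  proof (cases "u = 0")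
    case False
    have "sigma (1 / u\<^sup>2) p \<in> C" using Ginv_mem[OF G gens(4) pC] False by simp
    moreover have "g1 u = wscale u 1 (sigma (1 / u\<^sup>2) p)"
      by (rule pt_eqI) (use False in \<open>simp_all add: g1_def\<close>)
    ultimately show ?thesis using saturatedD[OF Xclosed_sat[OF Cc]] False by simp
  next
    case True
    have "sigma (1 / t\<^sup>2) p \<in> C" if "t \<noteq> 0" for t using Ginv_mem[OF G gens(4) pC] that by simp
    moreover have "g1 t = wscale t 1 (sigma (1 / t\<^sup>2) p)" if "t \<noteq> 0" for t
      by (rule pt_eqI) (use that in \<open>simp_all add: g1_def\<close>)
    ultimately have "g1 t \<in> C" if "t \<noteq> 0" for t using saturatedD[OF Xclosed_sat[OF Cc]] that by simp
    then show ?thesis using curve_limit[OF Cc pc1 g1X] True by simp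
  qed
  have C2: "g2 u \<in> C" for u
  proof (cases "u = 0")
    case False
    have "sigma (u\<^sup>2) p \<in> C" using Ginv_mem[OF G gens(4) pC] False by simp
    moreover have "g2 u = wscale 1 u (sigma (u\<^sup>2) p)"
      by (rule pt_eqI) (use False in \<open>simp_all add: g2_def\<close>)
    ultimately show ?thesis using saturatedD[OF Xclosed_sat[OF Cc]] False by simp
  next
    case True
    have "sigma (t\<^sup>2) p \<in> C" if "t \<noteq> 0" for t using Ginv_mem[OF G gens(4) pC] that by simp
    moreover have "g2 t = wscale 1 t (sigma (t\<^sup>2) p)" if "t \<noteq> 0" for t
      by (rule pt_eqI) (use that in \<open>simp_all add: g2_def\<close>)
    ultimately have "g2 t \<in> C" if "t \<noteq> 0" for t using saturatedD[OF Xclosed_sat[OF Cc]] that by simp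
    then show ?thesis using curve_limit[OF Cc pc2 g2X] True by simp
  qed
  have ZC: "Z \<subseteq> C"
  proof
    fix z assume "z \<in> Z"
    then obtain u where "z \<in> orb (g1 u) \<or> z \<in> orb (g2 u)" using cover by blast
    then show "z \<in> C" using orb_subset[OF Xclosed_sat[OF Cc] C1] orb_subset[OF Xclosed_sat[OF Cc] C2] by blast
  qed
  have pZ: "p \<in> Z" using pX by (simp add: Z_def)
  have d: "g1 0 \<notin> orb p"
  proof
    assume "g1 0 \<in> orb p"
    then obtain l m where "g1 0 = wscale l m p" "l \<noteq> 0" by (auto simp: orb_def)
    then have "l * s1 p = 0" "l * t1 p = 0" by (metis g1_def mult_zero_left pt.select_convs(1) wscale_sel(1),
                                              metis g1_def mult_zero_left pt.select_convs(2) wscale_sel(2))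
    then show False using \<open>l \<noteq> 0\<close> nz1 by auto
  qed
  show False
    by (rule stepA_core[OF C G Zirr ZC pZ in1 d pX _ nz1]) (simp add: Z_def)
qed

lemma stepA_case2:
  assumes C: "Xcurve a b c C" and G: "Ginvariant C" and pC: "p \<in> C"
    and w1p: "w1 p \<noteq> 0" and w2p: "w2 p = 0"
  shows False
proof -
  have CX: "C \<subseteq> Xcone a b c" by (rule curveX[OF C])
  have pX: "p \<in> Xcone a b c" using pC CX by blast
  have nz1: "(s1 p, t1 p) \<noteq> (0,0)" and nz2: "(s2 p, t2 p) \<noteq> (0,0)" using pairs_nz[OF G CX pC] by auto
  have qp: "qf a b c p = 0" using XconeD[OF pX] w2p by simp
  define Z where "Z = Xcone a b c \<inter> {x. s1 x * t1 p - t1 x * s1 p = 0} \<inter> {x. s2 x * t2 p - t2 x * s2 p = 0} \<inter> {x. w2 x = 0}"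
  have Zc: "Xclosed a b c Z" unfolding Z_def
    by (intro Xclosed_zero Xclosed_Xcone polyfun_diff pmul ps1 pt1 ps2 pt2 pw2 pconst)
       (simp_all add: mult.assoc flip: right_diff_distrib)
  define g1 where "g1 u = \<lparr>s1 = u * s1 p, t1 = u * t1 p, w1 = w1 p, s2 = s2 p, t2 = t2 p, w2 = 0\<rparr>" for u
  define g2 where "g2 u = \<lparr>s1 = s1 p, t1 = t1 p, w1 = u\<^sup>2 * w1 p, s2 = s2 p, t2 = t2 p, w2 = 0\<rparr>" for u
  have pc1: "pc g1" unfolding pc_def g1_def by (simp, intro conjI cpoly_mult cpoly_pow cpoly_id cpoly_const)
  have pc2: "pc g2" unfolding pc_def g2_def by (simp, intro conjI cpoly_mult cpoly_pow cpoly_id cpoly_const)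
  have g1X: "g1 u \<in> Xcone a b c" for u
  proof (rule XconeI)
    have "qf a b c (g1 u) = u\<^sup>2 * 1\<^sup>2 * qf a b c p" by (rule qf_cong) (simp_all add: g1_def)
    then show "w1 (g1 u) * w2 (g1 u) = qf a b c (g1 u)" using qp by (simp add: g1_def)
  qed (use w1p nz2 in \<open>auto simp: g1_def\<close>)
  have g2X: "g2 u \<in> Xcone a b c" for u
  proof (rule XconeI)
    have "qf a b c (g2 u) = 1\<^sup>2 * 1\<^sup>2 * qf a b c p" by (rule qf_cong) (simp_all add: g2_def)
    then show "w1 (g2 u) * w2 (g2 u) = qf a b c (g2 u)" using qp by (simp add: g2_def)
  qed (use nz1 nz2 in \<open>auto simp: g2_def\<close>)
  have in1: "g1 u \<in> Z" for u using g1X by (simp add: Z_def g1_def algebra_simps)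
  have in2: "g2 u \<in> Z" for u using g2X by (simp add: Z_def g2_def algebra_simps)
  have rel: "g2 u \<in> orb (g1 (1/u))" if "u \<noteq> 0" for u
  proof -
    have "g2 u = wscale u 1 (g1 (1/u))"
      by (rule pt_eqI) (use that in \<open>simp_all add: g1_def g2_def power2_eq_square field_simps\<close>)
    then show ?thesis using that unfolding orb_def by fastforce
  qed
  have cover: "\<exists>u. z \<in> orb (g1 u) \<or> z \<in> orb (g2 u)" if zZ: "z \<in> Z" for z
  proof -
    have zX: "z \<in> Xcone a b c" and e1: "s1 z * t1 p = t1 z * s1 p" and e2: "s2 z * t2 p = t2 z * s2 p"
      and w2z: "w2 z = 0" using zZ by (auto simp: Z_def)
    obtain la where la: "s1 z = la * s1 p" "t1 z = la * t1 p" using prop_ex[OF nz1 e1] by blast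
    obtain mu where mu: "s2 z = mu * s2 p" "t2 z = mu * t2 p" using prop_ex[OF nz2 e2] by blast
    have n1: "(s1 z, t1 z, w1 z) \<noteq> (0,0,0)" and n2: "(s2 z, t2 z, w2 z) \<noteq> (0,0,0)" using XconeD[OF zX] by auto
    have "mu \<noteq> 0" using n2 mu w2z by auto
    show ?thesis
    proof (cases "la = 0")
      case True
      then have "w1 z \<noteq> 0" using n1 la by auto
      define l where "l = csqrt (w1 z / w1 p)"
      have l2: "l\<^sup>2 * w1 p = w1 z" using w1p by (simp add: l_def)
      have "l \<noteq> 0" using l2 \<open>w1 z \<noteq> 0\<close> by auto
      have "z = wscale l mu (g1 0)"
        by (rule pt_eqI) (use la mu True l2 w2z in \<open>simp_all add: g1_def\<close>)
      then show ?thesis using \<open>l \<noteq> 0\<close> \<open>mu \<noteq> 0\<close> unfolding orb_def by blast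
    next
      case la0: False
      define v where "v = csqrt (w1 z / w1 p) / la"
      have v2: "la\<^sup>2 * (v\<^sup>2 * w1 p) = w1 z" using w1p la0 by (simp add: v_def power_divide)
      have "z = wscale la mu (g2 v)"
        by (rule pt_eqI) (use la mu v2 w2z in \<open>simp_all add: g2_def\<close>)
      then show ?thesis using la0 \<open>mu \<noteq> 0\<close> unfolding orb_def by blast
    qed
  qed
  have Zirr: "Xirreducible a b c Z" by (rule irr_curves[OF Zc pc1 pc2 in1 in2 cover rel])
  have Cc: "Xclosed a b c C" by (rule XirrD(1)[OF XcurveD(1)[OF C]])
  have C1': "g1 t \<in> C" if "t \<noteq> 0" for t
  proof -
    have "sigma (1 / t\<^sup>2) p \<in> C" using Ginv_mem[OF G gens(4) pC] that by simp
    moreover have "g1 t = wscale t 1 (sigma (1 / t\<^sup>2) p)"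
      by (rule pt_eqI) (use that w2p in \<open>simp_all add: g1_def\<close>)
    ultimately show ?thesis using saturatedD[OF Xclosed_sat[OF Cc]] that by simp
  qed
  have C1: "g1 u \<in> C" for u
    using C1' curve_limit[OF Cc pc1 g1X] by (cases "u = 0") auto
  have C2': "g2 t \<in> C" if "t \<noteq> 0" for t
  proof -
    have "sigma (t\<^sup>2) p \<in> C" using Ginv_mem[OF G gens(4) pC] that by simp
    moreover have "g2 t = sigma (t\<^sup>2) p"
      by (rule pt_eqI) (use that w2p in \<open>simp_all add: g2_def sigma_def\<close>)
    ultimately show ?thesis by simp
  qed
  have C2: "g2 u \<in> C" for u
    using C2' curve_limit[OF Cc pc2 g2X] by (cases "u = 0") auto
  have ZC: "Z \<subseteq> C"
  proof
    fix z assume "z \<in> Z"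
    then obtain u where "z \<in> orb (g1 u) \<or> z \<in> orb (g2 u)" using cover by blast
    then show "z \<in> C" using orb_subset[OF Xclosed_sat[OF Cc] C1] orb_subset[OF Xclosed_sat[OF Cc] C2] by blast
  qed
  have pZ: "p \<in> Z" using pX w2p by (simp add: Z_def)
  have d: "g2 0 \<notin> orb p"
  proof
    assume "g2 0 \<in> orb p"
    then obtain l m where lm: "g2 0 = wscale l m p" "l \<noteq> 0" by (auto simp: orb_def)
    have "w1 (g2 0) = l\<^sup>2 * w1 p" using lm(1) by simp
    then show False using \<open>l \<noteq> 0\<close> w1p by (simp add: g2_def)
  qed
  show False
    by (rule stepA_core[OF C G Zirr ZC pZ in2 d pX _ nz1]) (simp add: Z_def)
qed

lemma stepA_case3:
  assumes C: "Xcurve a b c C" and G: "Ginvariant C" and pC: "p \<in> C"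
    and w1p: "w1 p = 0" and w2p: "w2 p \<noteq> 0"
  shows False
proof -
  have CX: "C \<subseteq> Xcone a b c" by (rule curveX[OF C])
  have pX: "p \<in> Xcone a b c" using pC CX by blast
  have nz1: "(s1 p, t1 p) \<noteq> (0,0)" and nz2: "(s2 p, t2 p) \<noteq> (0,0)" using pairs_nz[OF G CX pC] by auto
  have qp: "qf a b c p = 0" using XconeD[OF pX] w1p by simp
  define Z where "Z = Xcone a b c \<inter> {x. s1 x * t1 p - t1 x * s1 p = 0} \<inter> {x. s2 x * t2 p - t2 x * s2 p = 0} \<inter> {x. w1 x = 0}"
  have Zc: "Xclosed a b c Z" unfolding Z_def
    by (intro Xclosed_zero Xclosed_Xcone polyfun_diff pmul ps1 pt1 ps2 pt2 pw1 pconst)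
       (simp_all add: mult.assoc flip: right_diff_distrib)
  define g1 where "g1 u = \<lparr>s1 = s1 p, t1 = t1 p, w1 = 0, s2 = u * s2 p, t2 = u * t2 p, w2 = w2 p\<rparr>" for u
  define g2 where "g2 u = \<lparr>s1 = s1 p, t1 = t1 p, w1 = 0, s2 = s2 p, t2 = t2 p, w2 = u\<^sup>2 * w2 p\<rparr>" for u
  have pc1: "pc g1" unfolding pc_def g1_def by (simp, intro conjI cpoly_mult cpoly_pow cpoly_id cpoly_const)
  have pc2: "pc g2" unfolding pc_def g2_def by (simp, intro conjI cpoly_mult cpoly_pow cpoly_id cpoly_const)
  have g1X: "g1 u \<in> Xcone a b c" for u
  proof (rule XconeI)
    have "qf a b c (g1 u) = 1\<^sup>2 * u\<^sup>2 * qf a b c p" by (rule qf_cong) (simp_all add: g1_def)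
    then show "w1 (g1 u) * w2 (g1 u) = qf a b c (g1 u)" using qp by (simp add: g1_def)
  qed (use w2p nz1 in \<open>auto simp: g1_def\<close>)
  have g2X: "g2 u \<in> Xcone a b c" for u
  proof (rule XconeI)
    have "qf a b c (g2 u) = 1\<^sup>2 * 1\<^sup>2 * qf a b c p" by (rule qf_cong) (simp_all add: g2_def)
    then show "w1 (g2 u) * w2 (g2 u) = qf a b c (g2 u)" using qp by (simp add: g2_def)
  qed (use nz1 nz2 in \<open>auto simp: g2_def\<close>)
  have in1: "g1 u \<in> Z" for u using g1X by (simp add: Z_def g1_def algebra_simps)
  have in2: "g2 u \<in> Z" for u using g2X by (simp add: Z_def g2_def algebra_simps)
  have rel: "g2 u \<in> orb (g1 (1/u))" if "u \<noteq> 0" for u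
  proof -
    have "g2 u = wscale 1 u (g1 (1/u))"
      by (rule pt_eqI) (use that in \<open>simp_all add: g1_def g2_def power2_eq_square field_simps\<close>)
    then show ?thesis using that unfolding orb_def by fastforce
  qed
  have cover: "\<exists>u. z \<in> orb (g1 u) \<or> z \<in> orb (g2 u)" if zZ: "z \<in> Z" for z
  proof -
    have zX: "z \<in> Xcone a b c" and e1: "s1 z * t1 p = t1 z * s1 p" and e2: "s2 z * t2 p = t2 z * s2 p"
      and w1z: "w1 z = 0" using zZ by (auto simp: Z_def)
    obtain la where la: "s1 z = la * s1 p" "t1 z = la * t1 p" using prop_ex[OF nz1 e1] by blast
    obtain mu where mu: "s2 z = mu * s2 p" "t2 z = mu * t2 p" using prop_ex[OF nz2 e2] by blast
    have n1: "(s1 z, t1 z, w1 z) \<noteq> (0,0,0)" and n2: "(s2 z, t2 z, w2 z) \<noteq> (0,0,0)" using XconeD[OF zX] by auto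
    have "la \<noteq> 0" using n1 la w1z by auto
    show ?thesis
    proof (cases "mu = 0")
      case True
      then have "w2 z \<noteq> 0" using n2 mu by auto
      define m where "m = csqrt (w2 z / w2 p)"
      have m2: "m\<^sup>2 * w2 p = w2 z" using w2p by (simp add: m_def)
      have "m \<noteq> 0" using m2 \<open>w2 z \<noteq> 0\<close> by auto
      have "z = wscale la m (g1 0)"
        by (rule pt_eqI) (use la mu True m2 w1z in \<open>simp_all add: g1_def\<close>)
      then show ?thesis using \<open>m \<noteq> 0\<close> \<open>la \<noteq> 0\<close> unfolding orb_def by blast
    next
      case mu0: False
      define v where "v = csqrt (w2 z / w2 p) / mu"
      have v2: "mu\<^sup>2 * (v\<^sup>2 * w2 p) = w2 z" using w2p mu0 by (simp add: v_def power_divide)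
      have "z = wscale la mu (g2 v)"
        by (rule pt_eqI) (use la mu v2 w1z in \<open>simp_all add: g2_def\<close>)
      then show ?thesis using mu0 \<open>la \<noteq> 0\<close> unfolding orb_def by blast
    qed
  qed
  have Zirr: "Xirreducible a b c Z" by (rule irr_curves[OF Zc pc1 pc2 in1 in2 cover rel])
  have Cc: "Xclosed a b c C" by (rule XirrD(1)[OF XcurveD(1)[OF C]])
  have C1': "g1 t \<in> C" if "t \<noteq> 0" for t
  proof -
    have "sigma (t\<^sup>2) p \<in> C" using Ginv_mem[OF G gens(4) pC] that by simp
    moreover have "g1 t = wscale 1 t (sigma (t\<^sup>2) p)"
      by (rule pt_eqI) (use that w1p in \<open>simp_all add: g1_def\<close>)
    ultimately show ?thesis using saturatedD[OF Xclosed_sat[OF Cc]] that by simp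
  qed
  have C1: "g1 u \<in> C" for u
    using C1' curve_limit[OF Cc pc1 g1X] by (cases "u = 0") auto
  have C2': "g2 t \<in> C" if "t \<noteq> 0" for t
  proof -
    have "sigma (1 / t\<^sup>2) p \<in> C" using Ginv_mem[OF G gens(4) pC] that by simp
    moreover have "g2 t = sigma (1 / t\<^sup>2) p"
      by (rule pt_eqI) (use that w1p in \<open>simp_all add: g2_def sigma_def\<close>)
    ultimately show ?thesis by simp
  qed
  have C2: "g2 u \<in> C" for u
    using C2' curve_limit[OF Cc pc2 g2X] by (cases "u = 0") auto
  have ZC: "Z \<subseteq> C"
  proof
    fix z assume "z \<in> Z"
    then obtain u where "z \<in> orb (g1 u) \<or> z \<in> orb (g2 u)" using cover by blast
    then show "z \<in> C" using orb_subset[OF Xclosed_sat[OF Cc] C1] orb_subset[OF Xclosed_sat[OF Cc] C2] by blast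
  qed
  have pZ: "p \<in> Z" using pX w1p by (simp add: Z_def)
  have d: "g2 0 \<notin> orb p"
  proof
    assume "g2 0 \<in> orb p"
    then obtain l m where lm: "g2 0 = wscale l m p" "m \<noteq> 0" by (auto simp: orb_def)
    have "w2 (g2 0) = m\<^sup>2 * w2 p" using lm(1) by simp
    then show False using \<open>m \<noteq> 0\<close> w2p by (simp add: g2_def)
  qed
  show False
    by (rule stepA_core[OF C G Zirr ZC pZ in2 d pX _ nz1]) (simp add: Z_def)
qed

lemma stepA:
  assumes C: "Xcurve a b c C" and G: "Ginvariant C"
  shows "C \<subseteq> F12 a b c"
proof
  fix p assume pC: "p \<in> C"
  have pX: "p \<in> Xcone a b c" using pC curveX[OF C] by blast
  have "w1 p = 0 \<and> w2 p = 0"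
    using stepA_case1[OF C G pC] stepA_case2[OF C G pC] stepA_case3[OF C G pC] by blast
  then show "p \<in> F12 a b c" using XconeD[OF pX] pX by (simp add: F12_def)
qed


definition ev2 :: "complex poly poly \<Rightarrow> complex \<Rightarrow> complex \<Rightarrow> complex" where
  "ev2 H x y = poly (poly H [:y:]) x"

lemma ev2_add[simp]: "ev2 (H + K) x y = ev2 H x y + ev2 K x y" by (simp add: ev2_def)
lemma ev2_mult[simp]: "ev2 (H * K) x y = ev2 H x y * ev2 K x y" by (simp add: ev2_def)
lemma ev2_smult[simp]: "ev2 (smult c H) x y = poly c x * ev2 H x y" by (simp add: ev2_def)
lemma ev2_const[simp]: "ev2 [:c:] x y = poly c x" by (simp add: ev2_def)
lemma ev2_Y: "ev2 [:0, 1:] x y = y" by (simp add: ev2_def)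
lemma ev2_X: "ev2 [:[:0, 1:]:] x y = x" by (simp add: ev2_def)

lemma poly_deg1: "degree (R::'a::comm_ring_1 poly) \<le> 1 \<Longrightarrow> poly R z = coeff R 0 + z * coeff R 1"
proof -
  assume d: "degree R \<le> 1"
  have "R = [:coeff R 0, coeff R 1:]"
  proof (rule poly_eqI)
    fix n show "coeff R n = coeff [:coeff R 0, coeff R 1:] n"
      using d by (cases n; cases "n - 1") (auto simp: coeff_eq_0 coeff_pCons)
  qed
  then show ?thesis by (metis add.right_neutral mult_zero_right poly_pCons poly_0)
qed

definition QQ :: "complex \<Rightarrow> complex \<Rightarrow> complex \<Rightarrow> complex \<Rightarrow> complex \<Rightarrow> complex" where
  "QQ a B C x y = a * x * y + B * (x\<^sup>2 * y\<^sup>2 + 1) + C * (x\<^sup>2 + y\<^sup>2)"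

definition Qp :: "complex \<Rightarrow> complex \<Rightarrow> complex \<Rightarrow> complex poly poly" where
  "Qp a B C = [:[:B, 0, C:], [:0, a:], [:C, 0, B:]:]"

lemma ev2_Qp: "ev2 (Qp a B C) x y = QQ a B C x y"
  by (simp add: ev2_def Qp_def QQ_def power2_eq_square algebra_simps)

lemma pseudo_step:
  assumes C: "C \<noteq> 0"
  shows "\<exists>k D r0 r1. \<forall>x y. (C + B * x\<^sup>2) ^ k * ev2 H x y = QQ a B C x y * ev2 D x y + (poly r0 x + y * poly r1 x)"
proof -
  let ?Q = "Qp a B C"
  have Q0: "?Q \<noteq> 0" using C by (simp add: Qp_def)
  have dQ: "degree ?Q = 2" using C by (simp add: Qp_def)
  have lc: "coeff ?Q (degree ?Q) = [:C, 0, B:]" unfolding dQ by (simp add: Qp_def numeral_2_eq_2)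
  obtain D R where pd: "pseudo_divmod H ?Q = (D, R)" by (cases "pseudo_divmod H ?Q") auto
  have e: "smult ([:C, 0, B:] ^ (Suc (degree H) - 2)) H = ?Q * D + R"
    using pseudo_divmod(1)[OF Q0 pd] lc dQ by simp
  have dR: "degree R \<le> 1" using pseudo_divmod(2)[OF Q0 pd] dQ by auto
  have "\<forall>x y. (C + B * x\<^sup>2) ^ (Suc (degree H) - 2) * ev2 H x y = QQ a B C x y * ev2 D x y + (poly (coeff R 0) x + y * poly (coeff R 1) x)"
  proof (intro allI)
    fix x y
    have "ev2 (smult ([:C, 0, B:] ^ (Suc (degree H) - 2)) H) x y = ev2 (?Q * D + R) x y" using e by simp
    moreover have "ev2 R x y = poly (coeff R 0) x + y * poly (coeff R 1) x"
      unfolding ev2_def using poly_deg1[OF dR, of "[:y:]"] by (simp add: algebra_simps)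
    moreover have "poly ([:C, 0, B:] ^ (Suc (degree H) - 2)) x = (C + B * x\<^sup>2) ^ (Suc (degree H) - 2)"
      by (simp add: poly_power power2_eq_square algebra_simps)
    ultimately show "(C + B * x\<^sup>2) ^ (Suc (degree H) - 2) * ev2 H x y = QQ a B C x y * ev2 D x y + (poly (coeff R 0) x + y * poly (coeff R 1) x)"
      by (simp only: ev2_smult ev2_add ev2_mult ev2_Qp)
  qed
  then show ?thesis by blast
qed

definition Dl :: "complex \<Rightarrow> complex \<Rightarrow> complex \<Rightarrow> complex poly" where
  "Dl a B C = [:-4*B*C, 0, a\<^sup>2 - 4*B\<^sup>2 - 4*C\<^sup>2, 0, -4*B*C:]"
lemma poly_Dl: "poly (Dl a B C) x = (a*x)\<^sup>2 - 4 * (C + B * x\<^sup>2) * (B + C * x\<^sup>2)"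
  by (simp add: Dl_def power2_eq_square algebra_simps)
lemma poly_dDl: "poly (pderiv (Dl a B C)) x = 2 * x * ((a\<^sup>2 - 4*B\<^sup>2 - 4*C\<^sup>2) - 8 * B * C * x\<^sup>2)"
  by (simp add: Dl_def pderiv_pCons power2_eq_square algebra_simps)
lemma Dl_simple_root:
  assumes B: "B \<noteq> 0" and C: "C \<noteq> 0" and h1: "a\<^sup>2 \<noteq> 4*(B+C)\<^sup>2" and h2: "a\<^sup>2 \<noteq> 4*(B-C)\<^sup>2"
  shows "\<exists>x0. poly (Dl a B C) x0 = 0 \<and> poly (pderiv (Dl a B C)) x0 \<noteq> 0"
proof -
  define D where "D = a\<^sup>2 - 4*B\<^sup>2 - 4*C\<^sup>2"
  define s where "s = csqrt (D\<^sup>2 - 64*B\<^sup>2*C\<^sup>2)"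
  define z where "z = (D + s) / (8*B*C)"
  have BC: "B * C \<noteq> 0" using B C by simp
  have s2: "s\<^sup>2 = D\<^sup>2 - 64*B\<^sup>2*C\<^sup>2" by (simp add: s_def)
  have qz: "4*B*C*z\<^sup>2 - D*z + 4*B*C = 0"
  proof -
    have "(4*B*C*z\<^sup>2 - D*z + 4*B*C) * (16*B*C) = (D+s)\<^sup>2 - 2*D*(D+s) + 64*B\<^sup>2*C\<^sup>2"
      using BC by (simp add: z_def field_simps power2_eq_square)
    also have "\<dots> = s\<^sup>2 - D\<^sup>2 + 64*B\<^sup>2*C\<^sup>2" by (simp add: power2_eq_square algebra_simps)
    also have "\<dots> = 0" using s2 by simp
    finally show ?thesis using BC by simp
  qed
  define x0 where "x0 = csqrt z"
  have x02: "x0\<^sup>2 = z" by (simp add: x0_def)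
  have z0: "z \<noteq> 0" using qz BC by auto
  have x00: "x0 \<noteq> 0" using x02 z0 by auto
  have r: "poly (Dl a B C) x0 = 0"
  proof -
    have "poly (Dl a B C) x0 = -(4*B*C*z\<^sup>2 - D*z + 4*B*C)"
      unfolding poly_Dl using x02 by (simp add: D_def power2_eq_square algebra_simps)
    then show ?thesis using qz by simp
  qed
  have nd: "D - 8*B*C*z \<noteq> 0"
  proof
    assume e: "D - 8*B*C*z = 0"
    then have "4*B*C*(z\<^sup>2 - 1) = 0" using qz by (simp add: power2_eq_square algebra_simps)
    then have "z\<^sup>2 = 1" using BC by simp
    then have "D\<^sup>2 = 64*B\<^sup>2*C\<^sup>2" using e by (simp add: power2_eq_square algebra_simps)
    then have "(D - 8*B*C) * (D + 8*B*C) = 0" by (simp add: power2_eq_square algebra_simps)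
    moreover have "D - 8*B*C = a\<^sup>2 - 4*(B+C)\<^sup>2" "D + 8*B*C = a\<^sup>2 - 4*(B-C)\<^sup>2"
      by (simp_all add: D_def power2_eq_square algebra_simps)
    ultimately show False using h1 h2 by simp
  qed
  have "poly (pderiv (Dl a B C)) x0 \<noteq> 0"
    unfolding poly_dDl using x02 x00 nd by (simp add: D_def)
  then show ?thesis using r by blast
qed

lemma Dl_nosq:
  assumes B: "B \<noteq> 0" and C: "C \<noteq> 0" and h1: "a\<^sup>2 \<noteq> 4*(B+C)\<^sup>2" and h2: "a\<^sup>2 \<noteq> 4*(B-C)\<^sup>2"
    and e: "P * P = Dl a B C * (S * S)" and S: "S \<noteq> 0"
  shows False
proof -
  obtain x0 where r: "poly (Dl a B C) x0 = 0" and nd: "poly (pderiv (Dl a B C)) x0 \<noteq> 0"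
    using Dl_simple_root[OF B C h1 h2] by blast
  have D0: "Dl a B C \<noteq> 0"
  proof
    assume "Dl a B C = 0"
    then have "poly (Dl a B C) 0 = 0" by simp
    then show False using B C by (simp add: Dl_def)
  qed
  have o1: "order x0 (Dl a B C) = 1"
    using order_pderiv[OF D0 r] order_0I[OF nd] by simp
  have nz: "Dl a B C * (S * S) \<noteq> 0" using D0 S by simp
  then have P: "P * P \<noteq> 0" using e by simp
  have "order x0 (P * P) = order x0 P + order x0 P" by (rule order_mult[OF P])
  moreover have "order x0 (Dl a B C * (S * S)) = 1 + (order x0 S + order x0 S)"
    using order_mult[OF nz] order_mult[of S S x0] S o1 by simp
  ultimately have "order x0 P + order x0 P = 1 + (order x0 S + order x0 S)" using e by simp
  then show False by presburger
qed

lemma M_zero: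
  fixes a B C :: complex and r0 r1 :: "complex poly"
  assumes B: "B \<noteq> 0" and C: "C \<noteq> 0" and h1: "a\<^sup>2 \<noteq> 4*(B+C)\<^sup>2" and h2: "a\<^sup>2 \<noteq> 4*(B-C)\<^sup>2"
    and M: "\<And>x. poly ([:C,0,B:] * r0 * r0 - [:0,a:] * r0 * r1 + [:B,0,C:] * r1 * r1) x = 0"
  shows "r0 = 0 \<and> r1 = 0"
proof (cases "r1 = 0")
  case True
  have "poly ([:C,0,B:] * (r0 * r0)) x = 0" for x using M[of x] True by (simp add: algebra_simps)
  then have "[:C,0,B:] * (r0 * r0) = 0" using poly_eq_poly_eq_iff[of "[:C,0,B:] * (r0 * r0)" 0] by auto
  moreover have "[:C,0,B:] \<noteq> 0" using C by simp
  ultimately have "r0 * r0 = 0" using no_zero_divisors by blast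
  then show ?thesis using True by simp
next
  case False
  define P where "P = smult 2 ([:C,0,B:] * r0) - [:0,a:] * r1"
  have "P * P = Dl a B C * (r1 * r1)"
  proof (rule iffD1[OF poly_eq_poly_eq_iff], rule ext)
    fix x
    have m: "(C + B*x\<^sup>2) * poly r0 x * poly r0 x - a * x * poly r0 x * poly r1 x + (B + C*x\<^sup>2) * poly r1 x * poly r1 x = 0"
      using M[of x] by (simp add: power2_eq_square algebra_simps)
    have "poly (P * P) x - poly (Dl a B C * (r1 * r1)) x =
       4 * (C + B*x\<^sup>2) * ((C + B*x\<^sup>2) * poly r0 x * poly r0 x - a * x * poly r0 x * poly r1 x + (B + C*x\<^sup>2) * poly r1 x * poly r1 x)"
      by (simp add: P_def poly_Dl power2_eq_square algebra_simps)
    then show "poly (P * P) x = poly (Dl a B C * (r1 * r1)) x" using m by simp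
  qed
  then show ?thesis using Dl_nosq[OF B C h1 h2 _ False] by blast
qed

lemma QQ_poly: "QQ a B C x y = poly [:B + C*x\<^sup>2, a*x, C + B*x\<^sup>2:] y"
  by (simp add: QQ_def power2_eq_square algebra_simps)

lemma QQ_fiber_finite:
  assumes B: "B \<noteq> 0" and C: "C \<noteq> 0" and h1: "a\<^sup>2 \<noteq> 4*(B+C)\<^sup>2" and h2: "a\<^sup>2 \<noteq> 4*(B-C)\<^sup>2"
  shows "finite {y. QQ a B C x y = 0}"
proof -
  have nz: "[:B + C*x\<^sup>2, a*x, C + B*x\<^sup>2:] \<noteq> 0"
  proof
    assume "[:B + C*x\<^sup>2, a*x, C + B*x\<^sup>2:] = 0"
    then have e: "B + C*x\<^sup>2 = 0" "a*x = 0" "C + B*x\<^sup>2 = 0" by auto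
    have "x \<noteq> 0" using e(3) C by auto
    then have a0: "a = 0" using e(2) by simp
    have c: "C = -(B*x\<^sup>2)" using e(3) by (simp add: eq_neg_iff_add_eq_0)
    have b: "B = -(C*x\<^sup>2)" using e(1) by (simp add: eq_neg_iff_add_eq_0)
    have "B = B * (x\<^sup>2)\<^sup>2"
    proof -
      have "B = -(C*x\<^sup>2)" by (rule b)
      also have "\<dots> = B * (x\<^sup>2)\<^sup>2" using c by (simp add: power2_eq_square)
      finally show ?thesis .
    qed
    then have x4: "(x\<^sup>2)\<^sup>2 = 1" using B by simp
    have "C\<^sup>2 = B\<^sup>2 * (x\<^sup>2)\<^sup>2" using c by (simp add: power_mult_distrib)
    then have "C\<^sup>2 = B\<^sup>2" using x4 by simp
    then have "(C - B) * (C + B) = 0" by (simp add: power2_eq_square algebra_simps)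
    then have "C = B \<or> C = -B" by (auto simp: add_eq_0_iff)
    then show False using h1 h2 a0 by auto
  qed
  show ?thesis unfolding QQ_poly using poly_roots_finite[OF nz] .
qed

lemma K:
  assumes B: "B \<noteq> 0" and C: "C \<noteq> 0" and h1: "a\<^sup>2 \<noteq> 4*(B+C)\<^sup>2" and h2: "a\<^sup>2 \<noteq> 4*(B-C)\<^sup>2"
    and inf: "infinite {(x,y). QQ a B C x y = 0 \<and> ev2 H x y = 0}"
  shows "QQ a B C x y = 0 \<Longrightarrow> C + B * x\<^sup>2 \<noteq> 0 \<Longrightarrow> ev2 H x y = 0"
proof -
  obtain k D r0 r1 where pd: "\<And>x y. (C + B * x\<^sup>2) ^ k * ev2 H x y = QQ a B C x y * ev2 D x y + (poly r0 x + y * poly r1 x)"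
    using pseudo_step[OF C, of B H a] by blast
  define S where "S = {(x,y). QQ a B C x y = 0 \<and> ev2 H x y = 0}"
  have sub: "S \<subseteq> Sigma (fst ` S) (\<lambda>x. {y. QQ a B C x y = 0})"
  proof
    fix p assume p: "p \<in> S"
    then have "fst p \<in> fst ` S" by blast
    moreover have "QQ a B C (fst p) (snd p) = 0" using p by (cases p) (auto simp: S_def)
    ultimately show "p \<in> Sigma (fst ` S) (\<lambda>x. {y. QQ a B C x y = 0})"
      by (cases p) auto
  qed
  have "infinite (fst ` S)"
  proof
    assume "finite (fst ` S)"
    then have "finite (Sigma (fst ` S) (\<lambda>x. {y. QQ a B C x y = 0}))"
      by (rule finite_SigmaI) (rule QQ_fiber_finite[OF B C h1 h2])
    then have "finite S" using sub by (rule finite_subset[rotated])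
    then show False using inf unfolding S_def by simp
  qed
  moreover have "finite {x. poly [:C,0,B:] x = 0}" using C by (intro poly_roots_finite) auto
  ultimately have inf2: "infinite (fst ` S - {x. poly [:C,0,B:] x = 0})" by (rule Diff_infinite_finite[rotated])
  define M where "M = [:C,0,B:] * r0 * r0 - [:0,a:] * r0 * r1 + [:B,0,C:] * r1 * r1"
  have "fst ` S - {x. poly [:C,0,B:] x = 0} \<subseteq> {x. poly M x = 0}"
  proof
    fix x assume "x \<in> fst ` S - {x. poly [:C,0,B:] x = 0}"
    then obtain y where xy: "QQ a B C x y = 0" "ev2 H x y = 0" unfolding S_def by auto
    have r: "poly r0 x = - y * poly r1 x" using pd[of x y] xy by (simp add: eq_neg_iff_add_eq_0)
    have "poly M x = (poly r1 x)\<^sup>2 * QQ a B C x y"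
      unfolding M_def QQ_def using r by (simp add: power2_eq_square algebra_simps)
    then show "x \<in> {x. poly M x = 0}" using xy by simp
  qed
  then have "infinite {x. poly M x = 0}" using inf2 finite_subset by blast
  then have "M = 0" using poly_roots_finite by blast
  then have "r0 = 0 \<and> r1 = 0" using M_zero[OF B C h1 h2, of r0 r1] unfolding M_def by simp
  then show "QQ a B C x y = 0 \<Longrightarrow> C + B * x\<^sup>2 \<noteq> 0 \<Longrightarrow> ev2 H x y = 0" using pd[of x y] by simp
qed


definition p2 :: "(complex \<Rightarrow> complex \<Rightarrow> complex) \<Rightarrow> bool" where
  "p2 g \<longleftrightarrow> (\<exists>H. \<forall>x y. g x y = ev2 H x y)"

lemma p2_const: "p2 (\<lambda>x y. c)" unfolding p2_def by (rule exI[of _ "[:[:c:]:]"]) simp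
lemma p2_X: "p2 (\<lambda>x y. x)" unfolding p2_def by (rule exI[of _ "[:[:0,1:]:]"]) (simp add: ev2_X)
lemma p2_Y: "p2 (\<lambda>x y. y)" unfolding p2_def by (rule exI[of _ "[:0,1:]"]) (simp add: ev2_Y)
lemma p2_add: "p2 f \<Longrightarrow> p2 g \<Longrightarrow> p2 (\<lambda>x y. f x y + g x y)"
  unfolding p2_def by (metis ev2_add)
lemma p2_mult: "p2 f \<Longrightarrow> p2 g \<Longrightarrow> p2 (\<lambda>x y. f x y * g x y)"
  unfolding p2_def by (metis ev2_mult)

definition pm :: "(complex \<Rightarrow> complex \<Rightarrow> pt) \<Rightarrow> bool" where
  "pm e \<longleftrightarrow> p2 (\<lambda>x y. s1 (e x y)) \<and> p2 (\<lambda>x y. t1 (e x y)) \<and> p2 (\<lambda>x y. w1 (e x y)) \<and>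
            p2 (\<lambda>x y. s2 (e x y)) \<and> p2 (\<lambda>x y. t2 (e x y)) \<and> p2 (\<lambda>x y. w2 (e x y))"

lemma pm_polyfun:
  assumes "f \<in> polyfun" "pm e" shows "p2 (\<lambda>x y. f (e x y))"
  using assms(1)
proof induction
  case (pconst c) then show ?case by (simp add: p2_const)
next
  case (padd f1 f2) show ?case by (rule p2_add[OF padd.IH])
next
  case (pmul f1 f2) show ?case by (rule p2_mult[OF pmul.IH])
qed (use assms(2) in \<open>simp_all add: pm_def\<close>)

definition e1 :: "complex \<Rightarrow> complex \<Rightarrow> pt" where
  "e1 x y = \<lparr>s1 = x, t1 = 1, w1 = 0, s2 = y, t2 = 1, w2 = 0\<rparr>"
definition e2 :: "complex \<Rightarrow> complex \<Rightarrow> pt" where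
  "e2 x y = \<lparr>s1 = 1, t1 = x, w1 = 0, s2 = 1, t2 = y, w2 = 0\<rparr>"

lemma pm_e1: "pm e1" "pm (\<lambda>x y. e1 y x)"
  unfolding pm_def e1_def by (simp_all add: p2_X p2_Y p2_const)
lemma pm_e2: "pm e2" "pm (\<lambda>x y. e2 y x)"
  unfolding pm_def e2_def by (simp_all add: p2_X p2_Y p2_const)

abbreviation BB :: "complex \<Rightarrow> complex \<Rightarrow> complex" where "BB b c \<equiv> (b + c) / 4"
abbreviation CC :: "complex \<Rightarrow> complex \<Rightarrow> complex" where "CC b c \<equiv> (b - c) / 4"

lemma qf_e1: "qf a b c (e1 x y) = QQ a (BB b c) (CC b c) x y"
  by (simp add: qf_def QQ_def e1_def algebra_simps)
lemma qf_e2: "qf a b c (e2 x y) = QQ a (BB b c) (CC b c) x y"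
  by (simp add: qf_def QQ_def e2_def algebra_simps)

lemma QQ_sym: "QQ a B C x y = QQ a B C y x"
  by (simp add: QQ_def algebra_simps)

lemma e1_F12: "e1 x y \<in> F12 a b c \<longleftrightarrow> QQ a (BB b c) (CC b c) x y = 0"
  by (auto simp: F12_def Xcone_def qf_e1 simp del: qf_def) (simp_all add: e1_def)
lemma e2_F12: "e2 x y \<in> F12 a b c \<longleftrightarrow> QQ a (BB b c) (CC b c) x y = 0"
  by (auto simp: F12_def Xcone_def qf_e2 simp del: qf_def) (simp_all add: e2_def)

lemma F12_X: "F12 a b c \<subseteq> Xcone a b c" by (auto simp: F12_def)

lemma half:
  fixes e :: "complex \<Rightarrow> complex \<Rightarrow> pt"
  assumes B: "B \<noteq> 0" and C: "C \<noteq> 0" and h1: "a\<^sup>2 \<noteq> 4*(B+C)\<^sup>2" and h2: "a\<^sup>2 \<noteq> 4*(B-C)\<^sup>2"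
    and pe: "pm e" and pe': "pm (\<lambda>x y. e y x)"
    and eF: "\<And>x y. e x y \<in> F12 a b c \<longleftrightarrow> QQ a B C x y = 0"
    and A: "Xclosed a b c A"
    and inf: "infinite {(x,y). QQ a B C x y = 0 \<and> e x y \<in> A}"
    and q: "QQ a B C x y = 0" and al: "C + B * x\<^sup>2 \<noteq> 0 \<or> C + B * y\<^sup>2 \<noteq> 0"
  shows "e x y \<in> A"
proof -
  obtain P where P: "P \<subseteq> polyfun" "A = {p \<in> Xcone a b c. \<forall>f\<in>P. f p = 0}" using A by (rule XclosedE)
  have eX: "e x y \<in> Xcone a b c" using eF[of x y] q F12_X by blast
  have "f (e x y) = 0" if fP: "f \<in> P" for f
  proof -
    have fpf: "f \<in> polyfun" using fP P by blast
    have van: "QQ a B C u v = 0 \<Longrightarrow> e u v \<in> A \<Longrightarrow> f (e u v) = 0" for u v using fP P by blast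
    show ?thesis
    proof (cases "C + B * x\<^sup>2 \<noteq> 0")
      case True
      obtain H where H: "\<And>u v. f (e u v) = ev2 H u v" using pm_polyfun[OF fpf pe] unfolding p2_def by blast
      have "{(x,y). QQ a B C x y = 0 \<and> e x y \<in> A} \<subseteq> {(x,y). QQ a B C x y = 0 \<and> ev2 H x y = 0}"
        using van H by auto
      then have "infinite {(x,y). QQ a B C x y = 0 \<and> ev2 H x y = 0}" using inf finite_subset by blast
      then show ?thesis using K[OF B C h1 h2 _ q True] H by simp
    next
      case False
      then have Ty: "C + B * y\<^sup>2 \<noteq> 0" using al by blast
      obtain H where H: "\<And>u v. f (e v u) = ev2 H u v" using pm_polyfun[OF fpf pe'] unfolding p2_def by blast
      have "(\<lambda>(x,y). (y,x)) ` {(x,y). QQ a B C x y = 0 \<and> e x y \<in> A} \<subseteq> {(x,y). QQ a B C x y = 0 \<and> ev2 H x y = 0}"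
        using van H QQ_sym by auto
      moreover have "infinite ((\<lambda>(x,y). (y,x)) ` {(x,y). QQ a B C x y = 0 \<and> e x y \<in> A})"
      proof
        assume "finite ((\<lambda>(x,y). (y,x)) ` {(x,y). QQ a B C x y = 0 \<and> e x y \<in> A})"
        moreover have "inj_on (\<lambda>(x,y). (y,x)) {(x,y). QQ a B C x y = 0 \<and> e x y \<in> A}"
          by (auto simp: inj_on_def)
        ultimately show False using inf finite_imageD by blast
      qed
      ultimately have "infinite {(x,y). QQ a B C x y = 0 \<and> ev2 H x y = 0}" using finite_subset by blast
      moreover have "QQ a B C y x = 0" using q QQ_sym by metis
      ultimately have "ev2 H y x = 0" using K[OF B C h1 h2 _ _ Ty] by blast
      then show ?thesis using H by simp
    qed
  qed
  then show ?thesis using P eX by blast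
qed

lemma quad_root: "(al::complex) \<noteq> 0 \<Longrightarrow> \<exists>y. al * y\<^sup>2 + be * y + ga = 0"
proof -
  assume al: "al \<noteq> 0"
  define s where "s = csqrt (be\<^sup>2 - 4*al*ga)"
  have s2: "s\<^sup>2 = be\<^sup>2 - 4*al*ga" by (simp add: s_def)
  define y where "y = (-be + s) / (2*al)"
  have "(al * y\<^sup>2 + be * y + ga) * (4*al) = s\<^sup>2 - be\<^sup>2 + 4*al*ga"
    using al by (simp add: y_def field_simps power2_eq_square)
  then have "(al * y\<^sup>2 + be * y + ga) * (4*al) = 0" using s2 by simp
  then show ?thesis using al by auto
qed

lemma QQ_inv: "x \<noteq> 0 \<Longrightarrow> y \<noteq> 0 \<Longrightarrow> QQ a B C (1/x) (1/y) = QQ a B C x y / (x\<^sup>2 * y\<^sup>2)"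
  by (simp add: QQ_def field_simps power2_eq_square)

lemma e_rel: "x \<noteq> 0 \<Longrightarrow> y \<noteq> 0 \<Longrightarrow> e2 x y \<in> orb (e1 (1/x) (1/y))"
  "x \<noteq> 0 \<Longrightarrow> y \<noteq> 0 \<Longrightarrow> e1 x y \<in> orb (e2 (1/x) (1/y))"
proof -
  assume "x \<noteq> 0" "y \<noteq> 0"
  have "e2 x y = wscale x y (e1 (1/x) (1/y))" by (rule pt_eqI) (use \<open>x \<noteq> 0\<close> \<open>y \<noteq> 0\<close> in \<open>simp_all add: e1_def e2_def\<close>)
  then show "e2 x y \<in> orb (e1 (1/x) (1/y))" using \<open>x \<noteq> 0\<close> \<open>y \<noteq> 0\<close> unfolding orb_def by blast
  have "e1 x y = wscale x y (e2 (1/x) (1/y))" by (rule pt_eqI) (use \<open>x \<noteq> 0\<close> \<open>y \<noteq> 0\<close> in \<open>simp_all add: e1_def e2_def\<close>)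
  then show "e1 x y \<in> orb (e2 (1/x) (1/y))" using \<open>x \<noteq> 0\<close> \<open>y \<noteq> 0\<close> unfolding orb_def by blast
qed

lemma W_infinite:
  assumes B: "B \<noteq> 0" and C: "C \<noteq> 0"
  shows "infinite {(x,y). QQ a B C x y = 0 \<and> x \<noteq> 0 \<and> y \<noteq> 0 \<and> C + B * (1/x)\<^sup>2 \<noteq> 0}"
proof -
  let ?W = "{(x,y). QQ a B C x y = 0 \<and> x \<noteq> 0 \<and> y \<noteq> 0 \<and> C + B * (1/x)\<^sup>2 \<noteq> 0}"
  define F where "F = {0} \<union> {x. poly [:C,0,B:] x = 0} \<union> {x. poly [:B,0,C:] x = 0}"
  have f1: "finite {x. poly [:C,0,B:] x = 0}" by (rule poly_roots_finite) (use C in simp)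
  have f2: "finite {x. poly [:B,0,C:] x = 0}" by (rule poly_roots_finite) (use B in simp)
  have fF: "finite F" unfolding F_def using f1 f2 by blast
  have "- F \<subseteq> fst ` ?W"
  proof
    fix x assume "x \<in> - F"
    then have x0: "x \<noteq> 0" and a1: "C + B * x\<^sup>2 \<noteq> 0" and a2: "B + C * x\<^sup>2 \<noteq> 0"
      by (auto simp: F_def power2_eq_square algebra_simps)
    have a3: "C + B * (1/x)\<^sup>2 \<noteq> 0"
    proof
      assume h: "C + B * (1/x)\<^sup>2 = 0"
      have "B + C * x\<^sup>2 = (C + B * (1/x)\<^sup>2) * x\<^sup>2" using x0 by (simp add: field_simps power2_eq_square)
      then show False using a2 h by simp
    qed
    obtain y where y: "(C + B * x\<^sup>2) * y\<^sup>2 + (a*x) * y + (B + C*x\<^sup>2) = 0" using quad_root[OF a1] by blast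
    have q: "QQ a B C x y = 0" using y by (simp add: QQ_def power2_eq_square algebra_simps)
    have "y \<noteq> 0" using y a2 by auto
    then have "(x,y) \<in> ?W" using q x0 a3 by simp
    then show "x \<in> fst ` ?W" by (rule image_eqI[where x="(x,y)", rotated]) simp
  qed
  moreover have "infinite (- F)" using fF by (rule infinite_compl_finite)
  ultimately have "infinite (fst ` ?W)" using finite_subset by blast
  then show ?thesis using finite_imageI by auto
qed

lemma half2:
  fixes e e' :: "complex \<Rightarrow> complex \<Rightarrow> pt"
  assumes B: "B \<noteq> 0" and C: "C \<noteq> 0" and h1: "a\<^sup>2 \<noteq> 4*(B+C)\<^sup>2" and h2: "a\<^sup>2 \<noteq> 4*(B-C)\<^sup>2"
    and pe: "pm e" "pm (\<lambda>x y. e y x)" and pe': "pm e'" "pm (\<lambda>x y. e' y x)"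
    and eF: "\<And>x y. e x y \<in> F12 a b c \<longleftrightarrow> QQ a B C x y = 0"
    and eF': "\<And>x y. e' x y \<in> F12 a b c \<longleftrightarrow> QQ a B C x y = 0"
    and rel: "\<And>x y. x \<noteq> 0 \<Longrightarrow> y \<noteq> 0 \<Longrightarrow> e' x y \<in> orb (e (1/x) (1/y))"
    and A: "Xclosed a b c A"
    and inf: "infinite {(x,y). QQ a B C x y = 0 \<and> e x y \<in> A}"
    and q: "QQ a B C x y = 0" and al: "C + B * x\<^sup>2 \<noteq> 0 \<or> C + B * y\<^sup>2 \<noteq> 0"
  shows "e x y \<in> A \<and> e' x y \<in> A"
proof
  note H = half[OF B C h1 h2 pe eF A inf]
  show "e x y \<in> A" by (rule H[OF q al])
  have "{(x,y). QQ a B C x y = 0 \<and> x \<noteq> 0 \<and> y \<noteq> 0 \<and> C + B * (1/x)\<^sup>2 \<noteq> 0} \<subseteq> {(x,y). QQ a B C x y = 0 \<and> e' x y \<in> A}"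
  proof safe
    fix u v assume uv: "QQ a B C u v = 0" "u \<noteq> 0" "v \<noteq> 0" "C + B * (1/u)\<^sup>2 \<noteq> 0"
    have "QQ a B C (1/u) (1/v) = 0" using QQ_inv[OF uv(2,3)] uv(1) by simp
    then have "e (1/u) (1/v) \<in> A" using H uv(4) by blast
    then show "e' u v \<in> A" using rel[OF uv(2,3)] orb_subset[OF Xclosed_sat[OF A]] by blast
  qed
  then have "infinite {(x,y). QQ a B C x y = 0 \<and> e' x y \<in> A}"
    using W_infinite[OF B C, of a] finite_subset by blast
  then show "e' x y \<in> A" by (rule half[OF B C h1 h2 pe' eF' A _ q al])
qed

lemma orb_trans: "q \<in> orb p \<Longrightarrow> p \<in> orb r \<Longrightarrow> q \<in> orb r"
  using orb_subset[OF orb_sat] by blast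

lemma double_exc:
  assumes B: "B \<noteq> 0" and C: "C \<noteq> 0" and h1: "a\<^sup>2 \<noteq> 4*(B+C)\<^sup>2" and h2: "a\<^sup>2 \<noteq> 4*(B-C)\<^sup>2"
    and ex: "C + B * x\<^sup>2 = 0" and ey: "C + B * y\<^sup>2 = 0" and ei: "C + B * (1/x)\<^sup>2 = 0"
    and q: "QQ a B C x y = 0"
  shows False
proof -
  have x0: "x \<noteq> 0" using ex C by auto
  have y0: "y \<noteq> 0" using ey C by auto
  define k where "k = x\<^sup>2"
  have k1: "B * k = - C" using ex by (simp add: k_def eq_neg_iff_add_eq_0 add.commute)
  have k2: "C * k = - B"
  proof -
    have "C * k + B = (C + B * (1/x)\<^sup>2) * x\<^sup>2" using x0 by (simp add: k_def field_simps power2_eq_square)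
    then show ?thesis using ei by (simp add: eq_neg_iff_add_eq_0)
  qed
  have "B * y\<^sup>2 = B * x\<^sup>2" using ex ey by (metis add_left_cancel)
  then have yk: "y\<^sup>2 = k" using B by (simp add: k_def)
  have "B * k * k = B" using k1 k2 by (metis minus_mult_left mult.commute mult.assoc minus_minus)
  then have kk: "k * k = 1" using B by (simp add: mult.assoc)
  have "QQ a B C x y = a * x * y + B * (k * k + 1) + C * (k + k)"
    using yk by (simp add: QQ_def k_def power2_eq_square)
  also have "\<dots> = a * x * y + 2 * (B + C * k)" using kk by (simp add: algebra_simps)
  also have "\<dots> = a * x * y" using k2 by simp
  finally have "a = 0" using q x0 y0 by simp
  have "(k - 1) * (k + 1) = 0" using kk by (simp add: algebra_simps)
  then have "k = 1 \<or> k = -1" by (auto simp: eq_neg_iff_add_eq_0)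
  then show False
  proof
    assume "k = 1" then have "B + C = 0" using k1 by simp
    then show False using h1 \<open>a = 0\<close> by simp
  next
    assume "k = -1" then have "B - C = 0" using k1 by simp
    then show False using h2 \<open>a = 0\<close> by simp
  qed
qed

lemma cover:
  assumes B: "B \<noteq> 0" and C: "C \<noteq> 0" and h1: "a\<^sup>2 \<noteq> 4*(B+C)\<^sup>2" and h2: "a\<^sup>2 \<noteq> 4*(B-C)\<^sup>2"
    and Bd: "B = BB b c" and Cd: "C = CC b c"
    and p: "p \<in> F12 a b c"
  shows "\<exists>x y. QQ a B C x y = 0 \<and> (C + B * x\<^sup>2 \<noteq> 0 \<or> C + B * y\<^sup>2 \<noteq> 0) \<and> (p \<in> orb (e1 x y) \<or> p \<in> orb (e2 x y))"
proof -
  have pX: "p \<in> Xcone a b c" and w1: "w1 p = 0" and w2: "w2 p = 0" and qp: "qf a b c p = 0"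
    using p by (auto simp: F12_def)
  have n1: "(s1 p, t1 p) \<noteq> (0,0)" and n2: "(s2 p, t2 p) \<noteq> (0,0)" using XconeD[OF pX] w1 w2 by auto
  have qfp: "qf a b c p = a * s1 p * t1 p * s2 p * t2 p + B * ((s1 p)\<^sup>2 * (s2 p)\<^sup>2 + (t1 p)\<^sup>2 * (t2 p)\<^sup>2)
     + C * ((s1 p)\<^sup>2 * (t2 p)\<^sup>2 + (t1 p)\<^sup>2 * (s2 p)\<^sup>2)" by (simp add: qf_def Bd Cd)
  show ?thesis
  proof (cases "t1 p \<noteq> 0 \<and> t2 p \<noteq> 0")
    case True
    define x where "x = s1 p / t1 p"
    define y where "y = s2 p / t2 p"
    have pe: "p = wscale (t1 p) (t2 p) (e1 x y)"
      by (rule pt_eqI) (use True w1 w2 in \<open>simp_all add: e1_def x_def y_def\<close>)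
    have "qf a b c p = (t1 p)\<^sup>2 * (t2 p)\<^sup>2 * qf a b c (e1 x y)" by (subst pe, rule qf_wscale)
    then have q: "QQ a B C x y = 0" using qp True by (simp add: qf_e1 Bd Cd)
    have po: "p \<in> orb (e1 x y)" using pe True unfolding orb_def by blast
    show ?thesis
    proof (cases "C + B * x\<^sup>2 \<noteq> 0 \<or> C + B * y\<^sup>2 \<noteq> 0")
      case True then show ?thesis using q po by blast
    next
      case False
      then have ex: "C + B * x\<^sup>2 = 0" and ey: "C + B * y\<^sup>2 = 0" by auto
      have x0: "x \<noteq> 0" using ex C by auto
      have y0: "y \<noteq> 0" using ey C by auto
      have q': "QQ a B C (1/x) (1/y) = 0" using QQ_inv[OF x0 y0] q by simp
      have "C + B * (1/x)\<^sup>2 \<noteq> 0" using double_exc[OF B C h1 h2 ex ey _ q] by blast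
      moreover have "p \<in> orb (e2 (1/x) (1/y))" using orb_trans[OF po e_rel(2)[OF x0 y0]] .
      ultimately show ?thesis using q' by blast
    qed
  next
    case False
    have s1n: "s1 p \<noteq> 0"
    proof
      assume s: "s1 p = 0"
      then have t1n: "t1 p \<noteq> 0" using n1 by auto
      then have "t2 p = 0" using False by auto
      then have "s2 p \<noteq> 0" using n2 by auto
      have "qf a b c p = C * (t1 p)\<^sup>2 * (s2 p)\<^sup>2" using qfp s \<open>t2 p = 0\<close> by simp
      then show False using qp C t1n \<open>s2 p \<noteq> 0\<close> by simp
    qed
    have s2n: "s2 p \<noteq> 0"
    proof
      assume s: "s2 p = 0"
      then have t2n: "t2 p \<noteq> 0" using n2 by auto
      then have "t1 p = 0" using False by auto
      have "qf a b c p = C * (s1 p)\<^sup>2 * (t2 p)\<^sup>2" using qfp s \<open>t1 p = 0\<close> by simp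
      then show False using qp C t2n s1n by simp
    qed
    define x where "x = t1 p / s1 p"
    define y where "y = t2 p / s2 p"
    have pe: "p = wscale (s1 p) (s2 p) (e2 x y)"
      by (rule pt_eqI) (use s1n s2n w1 w2 in \<open>simp_all add: e2_def x_def y_def\<close>)
    have "qf a b c p = (s1 p)\<^sup>2 * (s2 p)\<^sup>2 * qf a b c (e2 x y)" by (subst pe, rule qf_wscale)
    then have q: "QQ a B C x y = 0" using qp s1n s2n by (simp add: qf_e2 Bd Cd)
    have po: "p \<in> orb (e2 x y)" using pe s1n s2n unfolding orb_def by blast
    have "x = 0 \<or> y = 0" using False by (auto simp: x_def y_def)
    then have "C + B * x\<^sup>2 \<noteq> 0 \<or> C + B * y\<^sup>2 \<noteq> 0" using C by auto
    then show ?thesis using q po by blast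
  qed
qed


lemma dich:
  assumes B: "B \<noteq> 0" and C: "C \<noteq> 0" and h1: "a\<^sup>2 \<noteq> 4*(B+C)\<^sup>2" and h2: "a\<^sup>2 \<noteq> 4*(B-C)\<^sup>2"
    and Bd: "B = BB b c" and Cd: "C = CC b c"
    and A: "Xclosed a b c A"
    and inf: "infinite {(x,y). QQ a B C x y = 0 \<and> e1 x y \<in> A} \<or> infinite {(x,y). QQ a B C x y = 0 \<and> e2 x y \<in> A}"
  shows "F12 a b c \<subseteq> A"
proof -
  have eF1: "\<And>x y. e1 x y \<in> F12 a b c \<longleftrightarrow> QQ a B C x y = 0" unfolding Bd Cd by (rule e1_F12)
  have eF2: "\<And>x y. e2 x y \<in> F12 a b c \<longleftrightarrow> QQ a B C x y = 0" unfolding Bd Cd by (rule e2_F12)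
  have rel1: "\<And>x y. x \<noteq> 0 \<Longrightarrow> y \<noteq> 0 \<Longrightarrow> e2 x y \<in> orb (e1 (1/x) (1/y))" by (rule e_rel(1))
  have rel2: "\<And>x y. x \<noteq> 0 \<Longrightarrow> y \<noteq> 0 \<Longrightarrow> e1 x y \<in> orb (e2 (1/x) (1/y))" by (rule e_rel(2))
  have all: "e1 x y \<in> A \<and> e2 x y \<in> A" if "QQ a B C x y = 0" "C + B * x\<^sup>2 \<noteq> 0 \<or> C + B * y\<^sup>2 \<noteq> 0" for x y
    using inf
  proof
    assume i: "infinite {(x,y). QQ a B C x y = 0 \<and> e1 x y \<in> A}"
    show ?thesis using half2[OF B C h1 h2 pm_e1 pm_e2 eF1 eF2 rel1 A i that] by blast
  next
    assume i: "infinite {(x,y). QQ a B C x y = 0 \<and> e2 x y \<in> A}"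
    show ?thesis using half2[OF B C h1 h2 pm_e2 pm_e1 eF2 eF1 rel2 A i that] by blast
  qed
  show ?thesis
  proof
    fix p assume "p \<in> F12 a b c"
    then obtain x y where xy: "QQ a B C x y = 0" "C + B * x\<^sup>2 \<noteq> 0 \<or> C + B * y\<^sup>2 \<noteq> 0"
      and po: "p \<in> orb (e1 x y) \<or> p \<in> orb (e2 x y)" using cover[OF B C h1 h2 Bd Cd] by blast
    show "p \<in> A" using po all[OF xy] orb_subset[OF Xclosed_sat[OF A]] by blast
  qed
qed

lemma F12_closed: "Xclosed a b c (F12 a b c)"
proof -
  have "F12 a b c = Xcone a b c \<inter> {x. qf a b c x = 0} \<inter> {x. w1 x = 0} \<inter> {x. w2 x = 0}"
    by (auto simp: F12_def)
  moreover have "Xclosed a b c (Xcone a b c \<inter> {x. qf a b c x = 0} \<inter> {x. w1 x = 0} \<inter> {x. w2 x = 0})"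
    by (intro Xclosed_zero Xclosed_Xcone qf_polyfun pw1 pw2) (simp_all add: qf_wscale)
  ultimately show ?thesis by simp
qed

lemma Xclosed_empty: "Xclosed a b c {}"
  unfolding Xclosed_def saturated_def
  by (intro conjI exI[of _ "{\<lambda>_. 1}"]) (auto intro: pconst)

lemma orbs_closed:
  assumes "finite S" "S \<subseteq> Xcone a b c" shows "Xclosed a b c (\<Union>e\<in>S. orb e)"
  using assms
proof (induction S rule: finite_induct)
  case empty then show ?case by (simp add: Xclosed_empty)
next
  case (insert e S)
  have "Xclosed a b c (orb e \<union> (\<Union>e\<in>S. orb e))"
    using insert by (intro Xclosed_Un orb_closed) auto
  then show ?case by simp
qed

lemma irr_in_orbs:
  assumes "finite S" "S \<subseteq> Xcone a b c" "Xirreducible a b c Z" "Z \<subseteq> (\<Union>e\<in>S. orb e)"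
  shows "\<exists>e\<in>S. Z \<subseteq> orb e"
  using assms
proof (induction S rule: finite_induct)
  case empty then show ?case using XirrD(2) by auto
next
  case (insert e S)
  have Zc: "Xclosed a b c Z" by (rule XirrD(1)[OF insert.prems(2)])
  have c1: "Xclosed a b c (Z \<inter> orb e)" using insert Zc by (intro Xclosed_Int orb_closed) auto
  have c2: "Xclosed a b c (Z \<inter> (\<Union>e\<in>S. orb e))" using insert Zc by (intro Xclosed_Int orbs_closed) auto
  have "Z = (Z \<inter> orb e) \<union> (Z \<inter> (\<Union>e\<in>S. orb e))" using insert.prems(3) by auto
  then have "Z = Z \<inter> orb e \<or> Z = Z \<inter> (\<Union>e\<in>S. orb e)" using XirrD(3)[OF insert.prems(2) c1 c2] by blast
  then show ?case
  proof
    assume "Z = Z \<inter> orb e" then show ?thesis by blast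
  next
    assume "Z = Z \<inter> (\<Union>e\<in>S. orb e)"
    then have "\<exists>e\<in>S. Z \<subseteq> orb e" using insert by blast
    then show ?thesis by blast
  qed
qed

lemma F12_curve:
  assumes B: "B \<noteq> 0" and C: "C \<noteq> 0" and h1: "a\<^sup>2 \<noteq> 4*(B+C)\<^sup>2" and h2: "a\<^sup>2 \<noteq> 4*(B-C)\<^sup>2"
    and Bd: "B = BB b c" and Cd: "C = CC b c"
  shows "Xcurve a b c (F12 a b c)"
proof -
  have eF1: "\<And>x y. e1 x y \<in> F12 a b c \<longleftrightarrow> QQ a B C x y = 0" unfolding Bd Cd by (rule e1_F12)
  have eF2: "\<And>x y. e2 x y \<in> F12 a b c \<longleftrightarrow> QQ a B C x y = 0" unfolding Bd Cd by (rule e2_F12)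
  define T1 where "T1 A = {(x,y). QQ a B C x y = 0 \<and> e1 x y \<in> A}" for A
  define T2 where "T2 A = {(x,y). QQ a B C x y = 0 \<and> e2 x y \<in> A}" for A
  have D: "F12 a b c \<subseteq> A" if "Xclosed a b c A" "infinite (T1 A) \<or> infinite (T2 A)" for A
    using dich[OF B C h1 h2 Bd Cd that(1)] that(2) unfolding T1_def T2_def by blast
  have T1F: "infinite (T1 (F12 a b c))"
  proof -
    have "{(x,y). QQ a B C x y = 0 \<and> x \<noteq> 0 \<and> y \<noteq> 0 \<and> C + B * (1/x)\<^sup>2 \<noteq> 0} \<subseteq> T1 (F12 a b c)"
      unfolding T1_def using eF1 by auto
    then show ?thesis using W_infinite[OF B C, of a] finite_subset by blast
  qed
  have Fc: "Xclosed a b c (F12 a b c)" by (rule F12_closed)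
  have small: "\<exists>S. finite S \<and> S \<subseteq> Xcone a b c \<and> A \<subseteq> (\<Union>e\<in>S. orb e)"
    if A: "Xclosed a b c A" "A \<subseteq> F12 a b c" "A \<noteq> F12 a b c" for A
  proof -
    have f1: "finite (T1 A)" and f2: "finite (T2 A)" using D[OF A(1)] A(2,3) by blast+
    define S where "S = (\<lambda>(x,y). e1 x y) ` T1 A \<union> (\<lambda>(x,y). e2 x y) ` T2 A"
    have "finite S" using f1 f2 unfolding S_def by simp
    moreover have "S \<subseteq> Xcone a b c" unfolding S_def T1_def T2_def using eF1 eF2 F12_X[of a b c] by auto
    moreover have "A \<subseteq> (\<Union>e\<in>S. orb e)"
    proof
      fix p assume pA: "p \<in> A"
      then obtain x y where xy: "QQ a B C x y = 0"
        and po: "p \<in> orb (e1 x y) \<or> p \<in> orb (e2 x y)" using cover[OF B C h1 h2 Bd Cd] A(2) by blast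
      have oA: "orb p \<subseteq> A" using orb_subset[OF Xclosed_sat[OF A(1)] pA] .
      from po show "p \<in> (\<Union>e\<in>S. orb e)"
      proof
        assume h: "p \<in> orb (e1 x y)"
        then have "e1 x y \<in> A" using orb_sym[OF h more_unit] oA by blast
        then have "e1 x y \<in> S" using xy unfolding S_def T1_def by force
        then show ?thesis using h by blast
      next
        assume h: "p \<in> orb (e2 x y)"
        then have "e2 x y \<in> A" using orb_sym[OF h more_unit] oA by blast
        then have "e2 x y \<in> S" using xy unfolding S_def T2_def by force
        then show ?thesis using h by blast
      qed
    qed
    ultimately show ?thesis by blast
  qed
  have irr: "Xirreducible a b c (F12 a b c)"
    unfolding Xirreducible_def
  proof (intro conjI allI impI)
    show "Xclosed a b c (F12 a b c)" by (rule Fc)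
    show "F12 a b c \<noteq> {}" using T1F unfolding T1_def by (metis (no_types, lifting) empty_iff finite.emptyI mem_Collect_eq subsetI finite_subset case_prodE)
    fix A B' assume A: "Xclosed a b c A" and B': "Xclosed a b c B'" and e: "F12 a b c = A \<union> B'"
    have "T1 (F12 a b c) = T1 A \<union> T1 B'" unfolding T1_def e by auto
    then have "infinite (T1 A) \<or> infinite (T1 B')" using T1F by auto
    then show "F12 a b c = A \<or> F12 a b c = B'" using D[OF A] D[OF B'] e by blast
  qed
  obtain x0 y0 where x0: "(x0, y0) \<in> T1 (F12 a b c)" using T1F by (metis ex_in_conv finite.emptyI prod.exhaust)
  have e0F: "e1 x0 y0 \<in> F12 a b c" using x0 unfolding T1_def by simp
  have Zirr: "Xirreducible a b c (orb (e1 x0 y0))" using orb_irred e0F F12_X by blast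
  have Zsub: "orb (e1 x0 y0) \<subseteq> F12 a b c" using orb_subset[OF Xclosed_sat[OF Fc] e0F] .
  have "T1 (orb (e1 x0 y0)) \<subseteq> {(x0, y0)}"
  proof
    fix z assume "z \<in> T1 (orb (e1 x0 y0))"
    then obtain x y where z: "z = (x,y)" "e1 x y \<in> orb (e1 x0 y0)" unfolding T1_def by auto
    then obtain l m where lm: "e1 x y = wscale l m (e1 x0 y0)" unfolding orb_def by blast
    have "t1 (e1 x y) = t1 (wscale l m (e1 x0 y0))" "t2 (e1 x y) = t2 (wscale l m (e1 x0 y0))"
      "s1 (e1 x y) = s1 (wscale l m (e1 x0 y0))" "s2 (e1 x y) = s2 (wscale l m (e1 x0 y0))" using lm by simp_all
    then show "z \<in> {(x0, y0)}" using z by (simp add: e1_def)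
  qed
  then have "finite (T1 (orb (e1 x0 y0)))" using finite_subset by blast
  then have "orb (e1 x0 y0) \<noteq> F12 a b c" using T1F by auto
  then have ex: "\<exists>Z. Xirreducible a b c Z \<and> Z \<subset> F12 a b c" using Zirr Zsub by blast
  have nochain: False if Z1: "Xirreducible a b c Z1" and Z2: "Xirreducible a b c Z2" and s1: "Z1 \<subset> Z2" and s2: "Z2 \<subset> F12 a b c" for Z1 Z2
  proof -
    obtain S where S: "finite S" "S \<subseteq> Xcone a b c" "Z2 \<subseteq> (\<Union>e\<in>S. orb e)"
      using small[OF XirrD(1)[OF Z2]] s2 by blast
    obtain e where "Z2 \<subseteq> orb e" using irr_in_orbs[OF S(1,2) Z2 S(3)] by blast
    then have "Z2 = orb e" and "Z1 = orb e" using sat_sub_orb Xclosed_sat[OF XirrD(1)[OF Z2]] XirrD(2)[OF Z2]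
        Xclosed_sat[OF XirrD(1)[OF Z1]] XirrD(2)[OF Z1] s1 by (metis, metis order.trans psubset_imp_subset)
    then show False using s1 by simp
  qed
  show ?thesis unfolding Xcurve_def using irr ex nochain by blast
qed


lemma inv_image_eq: "(\<And>x. g (g x) = x) \<Longrightarrow> (\<And>x. x \<in> F \<Longrightarrow> g x \<in> F) \<Longrightarrow> g ` F = F"
  by (metis image_subset_iff subsetI subset_antisym imageI)

lemma qf_tau: "qf a b c (tau1 x) = qf a b c x" "qf a b c (tau2 x) = qf a b c x" "qf a b c (tau3 x) = qf a b c x"
  by (simp_all add: qf_def algebra_simps)

lemma F12_mem: "x \<in> F12 a b c \<longleftrightarrow> (s1 x, t1 x) \<noteq> (0,0) \<and> (s2 x, t2 x) \<noteq> (0,0) \<and> w1 x = 0 \<and> w2 x = 0 \<and> qf a b c x = 0"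
  by (auto simp: F12_def Xcone_def)

lemma gens_F12: "g \<in> Ggens \<Longrightarrow> g ` F12 a b c = F12 a b c"
proof -
  assume "g \<in> Ggens"
  then have "g = tau1 \<or> g = tau2 \<or> g = tau3 \<or> (\<exists>l. g = sigma l)" unfolding Ggens_def by blast
  then show ?thesis
  proof (elim disjE exE)
    assume "g = tau1" then show ?thesis
      by (intro inv_image_eq) (auto intro: pt_eqI simp: F12_mem qf_tau)
  next
    assume "g = tau2" then show ?thesis
      by (intro inv_image_eq) (auto intro: pt_eqI simp: F12_mem qf_tau)
  next
    assume "g = tau3" then show ?thesis
      by (intro inv_image_eq) (auto intro: pt_eqI simp: F12_mem qf_tau)
  next
    fix l assume g: "g = sigma l"
    have "sigma l x = x" if "x \<in> F12 a b c" for x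
      by (rule pt_eqI) (use that in \<open>simp_all add: F12_mem\<close>)
    then show ?thesis using g by force
  qed
qed

lemma F12_Ginv: "Ginvariant (F12 a b c)"
  unfolding Ginvariant_def
proof
  fix g assume "g \<in> Gset"
  then show "g ` F12 a b c = F12 a b c"
  proof induction
    case Gid then show ?case by simp
  next
    case (Gstep g h)
    have "(g \<circ> h) ` F12 a b c = g ` (h ` F12 a b c)" by (rule image_comp[symmetric])
    then show ?case using gens_F12[OF Gstep.hyps(1)] Gstep.IH by simp
  qed
qed

lemma swap_both:
  assumes C: "Xcurve a b c C" and G: "Ginvariant C" and g: "g \<in> Ggens"
    and f1: "f1 \<in> polyfun" and f2: "f2 \<in> polyfun"
    and h1: "\<And>x l m. f1 x = 0 \<Longrightarrow> l \<noteq> 0 \<Longrightarrow> m \<noteq> 0 \<Longrightarrow> f1 (wscale l m x) = 0"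
    and h2: "\<And>x l m. f2 x = 0 \<Longrightarrow> l \<noteq> 0 \<Longrightarrow> m \<noteq> 0 \<Longrightarrow> f2 (wscale l m x) = 0"
    and or: "\<And>x. x \<in> C \<Longrightarrow> f1 x = 0 \<or> f2 x = 0"
    and sw1: "\<And>x. f1 (g x) = 0 \<Longrightarrow> f2 x = 0" and sw2: "\<And>x. f2 (g x) = 0 \<Longrightarrow> f1 x = 0"
  shows "\<forall>x\<in>C. f1 x = 0 \<and> f2 x = 0"
proof -
  have Ci: "Xirreducible a b c C" by (rule XcurveD(1)[OF C])
  have Cc: "Xclosed a b c C" by (rule XirrD(1)[OF Ci])
  have A1: "Xclosed a b c (C \<inter> {x. f1 x = 0})" by (rule Xclosed_zero[OF Cc f1 h1])
  have A2: "Xclosed a b c (C \<inter> {x. f2 x = 0})" by (rule Xclosed_zero[OF Cc f2 h2])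
  have "C = (C \<inter> {x. f1 x = 0}) \<union> (C \<inter> {x. f2 x = 0})" using or by auto
  then have "C = C \<inter> {x. f1 x = 0} \<or> C = C \<inter> {x. f2 x = 0}" using XirrD(3)[OF Ci A1 A2] by blast
  then show ?thesis
  proof
    assume e: "C = C \<inter> {x. f1 x = 0}"
    show ?thesis
    proof
      fix x assume "x \<in> C"
      then have "g x \<in> C" using Ginv_mem[OF G g] by blast
      then have "f1 (g x) = 0" using e by blast
      then show "f1 x = 0 \<and> f2 x = 0" using sw1 \<open>x \<in> C\<close> e by blast
    qed
  next
    assume e: "C = C \<inter> {x. f2 x = 0}"
    show ?thesis
    proof
      fix x assume "x \<in> C"
      then have "g x \<in> C" using Ginv_mem[OF G g] by blast
      then have "f2 (g x) = 0" using e by blast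
      then show "f1 x = 0 \<and> f2 x = 0" using sw2 \<open>x \<in> C\<close> e by blast
    qed
  qed
qed

lemma curve_ne: "Xcurve a b c C \<Longrightarrow> \<exists>x. x \<in> C"
  using XirrD(2)[OF XcurveD(1)] by blast

lemma part2_PR:
  fixes eps del B K :: complex
  assumes C: "Xcurve a b c C" and G: "Ginvariant C" and CF: "C \<subseteq> F12 a b c"
    and e: "eps\<^sup>2 = 1" and d: "del\<^sup>2 = 1" and B: "B \<noteq> 0" and K: "K \<noteq> 0"
    and fq: "\<And>x. qf a b c x = B * (s1 x * s2 x + eps * t1 x * t2 x)\<^sup>2 + K * (s1 x * t2 x + del * t1 x * s2 x)\<^sup>2"
  shows False
proof -
  define k where "k = csqrt (- K / B)"
  have Bk: "B * k\<^sup>2 = - K" using B by (simp add: k_def)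
  have k0: "k \<noteq> 0" using Bk K by auto
  define P where "P x = s1 x * s2 x + eps * t1 x * t2 x" for x :: pt
  define R where "R x = s1 x * t2 x + del * t1 x * s2 x" for x :: pt
  have Pp: "P \<in> polyfun" unfolding P_def by (intro padd pmul pconst ps1 pt1 ps2 pt2)
  have Rp: "R \<in> polyfun" unfolding R_def by (intro padd pmul pconst ps1 pt1 ps2 pt2)
  have Ph: "P (wscale l m x) = l * m * P x" for l m x by (simp add: P_def algebra_simps)
  have Rh: "R (wscale l m x) = l * m * R x" for l m x by (simp add: R_def algebra_simps)
  have Pt: "P (tau3 x) = P x" for x by (simp add: P_def)
  have Rt: "R (tau3 x) = - R x" for x by (simp add: R_def algebra_simps)
  have f1: "(\<lambda>x. P x - k * R x) \<in> polyfun" by (intro polyfun_diff pmul pconst Pp Rp)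
  have f2: "(\<lambda>x. P x + k * R x) \<in> polyfun" by (intro padd pmul pconst Pp Rp)
  have qx: "qf a b c x = 0" if "x \<in> C" for x using that CF by (auto simp: F12_def)
  have or1: "P x - k * R x = 0 \<or> P x + k * R x = 0" if "x \<in> C" for x
  proof -
    have "B * ((P x - k * R x) * (P x + k * R x)) = B * (P x)\<^sup>2 - (B * k\<^sup>2) * (R x)\<^sup>2"
      by (simp add: power2_eq_square algebra_simps)
    also have "\<dots> = B * (P x)\<^sup>2 + K * (R x)\<^sup>2" using Bk by simp
    also have "\<dots> = qf a b c x" using fq[of x] by (simp add: P_def R_def)
    finally have "qf a b c x = B * ((P x - k * R x) * (P x + k * R x))" by simp
    then show ?thesis using qx[OF that] B by simp
  qed
  have hf1: "P (wscale l m x) - k * R (wscale l m x) = l*m*(P x - k * R x)" for l m x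
    by (simp add: Ph Rh algebra_simps)
  have hf2: "P (wscale l m x) + k * R (wscale l m x) = l*m*(P x + k * R x)" for l m x
    by (simp add: Ph Rh algebra_simps)
  have all1: "\<forall>x\<in>C. P x - k * R x = 0 \<and> P x + k * R x = 0"
    by (rule swap_both[OF C G gens(3) f1 f2]) (simp_all only: hf1 hf2 Pt Rt or1, simp_all)
  have PR0: "P x = 0 \<and> R x = 0" if "x \<in> C" for x
  proof -
    have "P x - k * R x = 0" "P x + k * R x = 0" using all1 that by auto
    then have "2 * k * R x = 0" by (simp add: algebra_simps)
    then have "R x = 0" using k0 by simp
    then show ?thesis using \<open>P x - k * R x = 0\<close> by simp
  qed
  have e0: "eps \<noteq> 0" using e by auto
  have d0: "del \<noteq> 0" using d by auto
  have sq: "(s1 x)\<^sup>2 = eps * del * (t1 x)\<^sup>2" if "x \<in> C" for x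
  proof -
    have p: "s1 x * s2 x = - (eps * t1 x * t2 x)" and r: "s1 x * t2 x = - (del * t1 x * s2 x)"
      using PR0[OF that] by (simp_all add: P_def R_def eq_neg_iff_add_eq_0)
    have n1: "(s1 x, t1 x) \<noteq> (0,0)" and n2: "(s2 x, t2 x) \<noteq> (0,0)" using that CF by (auto simp: F12_mem)
    have "s2 x \<noteq> 0"
    proof
      assume "s2 x = 0"
      then have "t2 x \<noteq> 0" using n2 by auto
      have "s1 x = 0" using r \<open>s2 x = 0\<close> \<open>t2 x \<noteq> 0\<close> by simp
      have "t1 x = 0" using p \<open>s2 x = 0\<close> \<open>t2 x \<noteq> 0\<close> e0 by simp
      then show False using n1 \<open>s1 x = 0\<close> by simp
    qed
    have "t2 x \<noteq> 0"
    proof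
      assume "t2 x = 0"
      have "s1 x = 0" using p \<open>t2 x = 0\<close> \<open>s2 x \<noteq> 0\<close> by simp
      have "t1 x = 0" using r \<open>t2 x = 0\<close> \<open>s2 x \<noteq> 0\<close> d0 by simp
      then show False using n1 \<open>s1 x = 0\<close> by simp
    qed
    have "(s1 x * s2 x) * (s1 x * t2 x) = (eps * t1 x * t2 x) * (del * t1 x * s2 x)" using p r by simp
    then have "((s1 x)\<^sup>2 - eps * del * (t1 x)\<^sup>2) * (s2 x * t2 x) = 0" by (simp add: power2_eq_square algebra_simps)
    then show ?thesis using \<open>s2 x \<noteq> 0\<close> \<open>t2 x \<noteq> 0\<close> by simp
  qed
  define rho where "rho = csqrt (eps * del)"
  have rho2: "rho\<^sup>2 = eps * del" by (simp add: rho_def)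
  have rho0: "rho \<noteq> 0" using rho2 e0 d0 by auto
  have g1: "(\<lambda>x. s1 x - rho * t1 x) \<in> polyfun" by (intro polyfun_diff pmul pconst ps1 pt1)
  have g2: "(\<lambda>x. s1 x + rho * t1 x) \<in> polyfun" by (intro padd pmul pconst ps1 pt1)
  have or2: "s1 x - rho * t1 x = 0 \<or> s1 x + rho * t1 x = 0" if "x \<in> C" for x
  proof -
    have "(s1 x - rho * t1 x) * (s1 x + rho * t1 x) = (s1 x)\<^sup>2 - rho\<^sup>2 * (t1 x)\<^sup>2" by (simp add: power2_eq_square algebra_simps)
    also have "\<dots> = 0" using sq[OF that] rho2 by simp
    finally show ?thesis by simp
  qed
  have hg1: "s1 (wscale l m x) - rho * t1 (wscale l m x) = l*(s1 x - rho * t1 x)" for l m x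
    by (simp add: algebra_simps)
  have hg2: "s1 (wscale l m x) + rho * t1 (wscale l m x) = l*(s1 x + rho * t1 x)" for l m x
    by (simp add: algebra_simps)
  have all2: "\<forall>x\<in>C. s1 x - rho * t1 x = 0 \<and> s1 x + rho * t1 x = 0"
    by (rule swap_both[OF C G gens(3) g1 g2]) (simp_all only: hg1 hg2 or2, simp_all)
  obtain x where x: "x \<in> C" using curve_ne[OF C] by blast
  have "s1 x - rho * t1 x = 0" "s1 x + rho * t1 x = 0" using all2 x by auto
  then have "2 * rho * t1 x = 0" by (simp add: algebra_simps)
  then have "t1 x = 0" "s1 x = 0" using rho0 \<open>s1 x - rho * t1 x = 0\<close> by auto
  moreover have "(s1 x, t1 x) \<noteq> (0,0)" using x CF by (auto simp: F12_mem)
  ultimately show False by simp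
qed

lemma part2_UV:
  fixes U V :: "pt \<Rightarrow> complex" and r1 r2 ka :: complex
  assumes C: "Xcurve a b c C" and G: "Ginvariant C" and CF: "C \<subseteq> F12 a b c"
    and Up: "U \<in> polyfun" and Vp: "V \<in> polyfun"
    and Uh: "\<And>l m x. U (wscale l m x) = l * m * U x" and Vh: "\<And>l m x. V (wscale l m x) = l * m * V x"
    and Ut: "\<And>x. U (tau2 x) = V x" and Vt: "\<And>x. V (tau2 x) = U x"
    and fq: "\<And>x. qf a b c x = ka * ((U x - r1 * V x) * (U x - r2 * V x))"
    and r12: "r1 * r2 = 1" and rne: "r1 \<noteq> r2" and ka: "ka \<noteq> 0"
    and UV0: "\<And>x. (s1 x, t1 x) \<noteq> (0,0) \<Longrightarrow> (s2 x, t2 x) \<noteq> (0,0) \<Longrightarrow> U x = 0 \<Longrightarrow> V x = 0 \<Longrightarrow> s1 x = 0 \<or> t1 x = 0"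
  shows False
proof -
  have f1: "(\<lambda>x. U x - r1 * V x) \<in> polyfun" by (intro polyfun_diff pmul pconst Up Vp)
  have f2: "(\<lambda>x. U x - r2 * V x) \<in> polyfun" by (intro polyfun_diff pmul pconst Up Vp)
  have hf1: "U (wscale l m x) - r1 * V (wscale l m x) = l*m*(U x - r1 * V x)" for l m x
    by (simp add: Uh Vh algebra_simps)
  have hf2: "U (wscale l m x) - r2 * V (wscale l m x) = l*m*(U x - r2 * V x)" for l m x
    by (simp add: Uh Vh algebra_simps)
  have qx: "qf a b c x = 0" if "x \<in> C" for x using that CF by (auto simp: F12_def)
  have or1: "U x - r1 * V x = 0 \<or> U x - r2 * V x = 0" if "x \<in> C" for x
    using qx[OF that] fq[of x] ka by simp
  have r10: "r1 \<noteq> 0" and r20: "r2 \<noteq> 0" using r12 by auto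
  have sw1: "U (tau2 x) - r1 * V (tau2 x) = - r1 * (U x - r2 * V x)" for x
    using r12 by (simp add: Ut Vt algebra_simps)
  have sw2: "U (tau2 x) - r2 * V (tau2 x) = - r2 * (U x - r1 * V x)" for x
    using r12 by (simp add: Ut Vt algebra_simps)
  have all1: "\<forall>x\<in>C. U x - r1 * V x = 0 \<and> U x - r2 * V x = 0"
    by (rule swap_both[OF C G gens(2) f1 f2]) (simp_all only: hf1 hf2 sw1 sw2 or1, simp_all add: r10 r20)
  have or2: "s1 x = 0 \<or> t1 x = 0" if "x \<in> C" for x
  proof -
    have "U x - r1 * V x = 0" "U x - r2 * V x = 0" using all1 that by auto
    then have "(r1 - r2) * V x = 0" by (simp add: algebra_simps)
    then have "V x = 0" using rne by simp
    then have "U x = 0" using \<open>U x - r1 * V x = 0\<close> by simp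
    moreover have "(s1 x, t1 x) \<noteq> (0,0)" "(s2 x, t2 x) \<noteq> (0,0)" using that CF by (auto simp: F12_mem)
    ultimately show ?thesis using UV0 \<open>V x = 0\<close> by blast
  qed
  have all2: "\<forall>x\<in>C. s1 x = 0 \<and> t1 x = 0"
    by (rule swap_both[OF C G gens(2) ps1 pt1]) (simp_all add: or2)
  obtain x where x: "x \<in> C" using curve_ne[OF C] by blast
  moreover have "(s1 x, t1 x) \<noteq> (0,0)" using x CF by (auto simp: F12_mem)
  ultimately show False using all2 by auto
qed

lemma fq_PR:
  assumes e: "eps = 1 \<or> eps = -1" and d: "del = 1 \<or> del = -1"
    and a: "a = eps * (b + c) / 2 + del * (b - c) / 2"
  shows "qf a b c x = (b + c) / 4 * (s1 x * s2 x + eps * t1 x * t2 x)\<^sup>2 + (b - c) / 4 * (s1 x * t2 x + del * t1 x * s2 x)\<^sup>2"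
  using e d a by (elim disjE) (simp_all add: qf_def power2_eq_square algebra_simps add_divide_distrib diff_divide_distrib)

lemma case_PR:
  assumes C: "Xcurve a b c C" and G: "Ginvariant C"
    and e: "eps = 1 \<or> eps = -1" and d: "del = 1 \<or> del = -1"
    and a: "a = eps * (b + c) / 2 + del * (b - c) / 2"
    and B: "b + c \<noteq> 0" and K: "b - c \<noteq> 0"
  shows False
proof -
  have CF: "C \<subseteq> F12 a b c" by (rule stepA[OF C G])
  show False
    by (rule part2_PR[OF C G CF _ _ _ _ fq_PR[OF e d a]])
       (use e d B K in auto)
qed

lemma case_bc:
  assumes C: "Xcurve a b c C" and G: "Ginvariant C"
    and bc: "c = b \<or> c = -b" and b0: "b \<noteq> 0" and ab: "a\<^sup>2 \<noteq> b\<^sup>2"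
  shows False
proof -
  have CF: "C \<subseteq> F12 a b c" by (rule stepA[OF C G])
  define sq where "sq = csqrt (a\<^sup>2 - b\<^sup>2)"
  have sq2: "sq\<^sup>2 = a\<^sup>2 - b\<^sup>2" by (simp add: sq_def)
  have sq0: "sq \<noteq> 0" using sq2 ab by auto
  define r1 where "r1 = (-a + sq) / b"
  define r2 where "r2 = (-a - sq) / b"
  have r12: "r1 * r2 = 1"
  proof -
    have "r1 * r2 = (a\<^sup>2 - sq\<^sup>2) / b\<^sup>2" using b0 by (simp add: r1_def r2_def field_simps power2_eq_square)
    then show ?thesis using sq2 b0 by simp
  qed
  have rs: "r1 + r2 = - 2 * a / b" using b0 by (simp add: r1_def r2_def field_simps)
  have rne: "r1 \<noteq> r2" using sq0 b0 by (simp add: r1_def r2_def field_simps)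
  have fac: "b / 2 * ((u - r1 * v) * (u - r2 * v)) = a * u * v + b / 2 * (u\<^sup>2 + v\<^sup>2)" for u v
  proof -
    have "b / 2 * ((u - r1 * v) * (u - r2 * v)) = b / 2 * (u\<^sup>2 - (r1 + r2) * u * v + (r1 * r2) * v\<^sup>2)"
      by (simp add: power2_eq_square algebra_simps)
    also have "\<dots> = a * u * v + b / 2 * (u\<^sup>2 + v\<^sup>2)" using b0 by (simp add: rs r12 field_simps power2_eq_square)
    finally show ?thesis .
  qed
  have ka: "b / 2 \<noteq> 0" using b0 by simp
  from bc show False
  proof
    assume cb: "c = b"
    show False
    proof (rule part2_UV[OF C G CF _ _ _ _ _ _ _ r12 rne ka, of "\<lambda>x. s1 x * s2 x" "\<lambda>x. t1 x * t2 x"])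
      show "(\<lambda>x. s1 x * s2 x) \<in> polyfun" by (intro pmul ps1 ps2)
      show "(\<lambda>x. t1 x * t2 x) \<in> polyfun" by (intro pmul pt1 pt2)
      show "qf a b c x = b / 2 * ((s1 x * s2 x - r1 * (t1 x * t2 x)) * (s1 x * s2 x - r2 * (t1 x * t2 x)))" for x
        unfolding fac by (simp add: qf_def cb power2_eq_square algebra_simps)
      show "s1 x = 0 \<or> t1 x = 0" if "(s1 x, t1 x) \<noteq> (0, 0)" "(s2 x, t2 x) \<noteq> (0, 0)" "s1 x * s2 x = 0" "t1 x * t2 x = 0" for x
        using that by auto
    qed (simp_all add: algebra_simps)
  next
    assume cb: "c = -b"
    show False
    proof (rule part2_UV[OF C G CF _ _ _ _ _ _ _ r12 rne ka, of "\<lambda>x. s1 x * t2 x" "\<lambda>x. t1 x * s2 x"])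
      show "(\<lambda>x. s1 x * t2 x) \<in> polyfun" by (intro pmul ps1 pt2)
      show "(\<lambda>x. t1 x * s2 x) \<in> polyfun" by (intro pmul pt1 ps2)
      show "qf a b c x = b / 2 * ((s1 x * t2 x - r1 * (t1 x * s2 x)) * (s1 x * t2 x - r2 * (t1 x * s2 x)))" for x
        unfolding fac by (simp add: qf_def cb power2_eq_square algebra_simps)
      show "s1 x = 0 \<or> t1 x = 0" if "(s1 x, t1 x) \<noteq> (0, 0)" "(s2 x, t2 x) \<noteq> (0, 0)" "s1 x * t2 x = 0" "t1 x * s2 x = 0" for x
        using that by auto
    qed (simp_all add: algebra_simps)
  qed
qed

lemma pe_intro: "k \<noteq> 0 \<Longrightarrow> a = k * x \<Longrightarrow> b = k * y \<Longrightarrow> c = k * z \<Longrightarrow> proj_eq (a, b, c) (x, y, z)"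
  unfolding proj_eq_def by auto

theorem mainTheorem17:
  fixes a b c :: complex
  assumes "(a, b, c) \<noteq> (0, 0, 0)"
    and "\<forall>e1 e2 :: complex. e1 \<in> {1, -1} \<longrightarrow> e2 \<in> {1, -1} \<longrightarrow> \<not> proj_eq (a, b, c) (1, e1, e2)"
    and "\<not> proj_eq (a, b, c) (1, 0, 0)" and "\<not> proj_eq (a, b, c) (0, 1, 0)"
    and "\<not> proj_eq (a, b, c) (0, 0, 1)"
  shows "((a\<^sup>2 - b\<^sup>2) * (a\<^sup>2 - c\<^sup>2) * (b\<^sup>2 - c\<^sup>2) \<noteq> 0 \<longrightarrow>
            (\<forall>C. (Xcurve a b c C \<and> Ginvariant C) \<longleftrightarrow> C = F12 a b c))
       \<and> ((a\<^sup>2 - b\<^sup>2) * (a\<^sup>2 - c\<^sup>2) * (b\<^sup>2 - c\<^sup>2) = 0 \<longrightarrow>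
            \<not> (\<exists>C. Xcurve a b c C \<and> Ginvariant C))"
proof (intro conjI impI)
  have nz: "\<not> (a = 0 \<and> b = 0 \<and> c = 0)" using assms(1) by auto
  have H: "\<not> (a \<noteq> 0 \<and> b = e1 * a \<and> c = e2 * a)" if "e1 = 1 \<or> e1 = -1" "e2 = 1 \<or> e2 = -1" for e1 e2
  proof
    assume h: "a \<noteq> 0 \<and> b = e1 * a \<and> c = e2 * a"
    have "proj_eq (a, b, c) (1, e1, e2)" using h by (intro pe_intro[of a]) auto
    then show False using assms(2) that by auto
  qed
  {
    assume p: "(a\<^sup>2 - b\<^sup>2) * (a\<^sup>2 - c\<^sup>2) * (b\<^sup>2 - c\<^sup>2) \<noteq> 0"
    have ab: "a\<^sup>2 \<noteq> b\<^sup>2" and ac: "a\<^sup>2 \<noteq> c\<^sup>2" and bc: "b\<^sup>2 \<noteq> c\<^sup>2" using p by auto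
    have bc2: "(b - c) * (b + c) \<noteq> 0" using bc by (simp add: power2_eq_square algebra_simps)
    have B: "BB b c \<noteq> 0" and K: "CC b c \<noteq> 0" using bc2 by auto
    have h1: "a\<^sup>2 \<noteq> 4 * (BB b c + CC b c)\<^sup>2" using ab by (simp add: power2_eq_square field_simps)
    have h2: "a\<^sup>2 \<noteq> 4 * (BB b c - CC b c)\<^sup>2" using ac by (simp add: power2_eq_square field_simps)
    have Fcurve: "Xcurve a b c (F12 a b c)" by (rule F12_curve[OF B K h1 h2 refl refl])
    show "\<forall>C. (Xcurve a b c C \<and> Ginvariant C) \<longleftrightarrow> C = F12 a b c"
    proof (intro allI iffI)
      fix C assume "C = F12 a b c" then show "Xcurve a b c C \<and> Ginvariant C" using Fcurve F12_Ginv by simp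
    next
      fix C assume CG: "Xcurve a b c C \<and> Ginvariant C"
      have CF: "C \<subseteq> F12 a b c" using stepA CG by blast
      show "C = F12 a b c"
      proof (rule ccontr)
        assume "C \<noteq> F12 a b c"
        then have "C \<subset> F12 a b c" using CF by blast
        moreover obtain Z where "Xirreducible a b c Z" "Z \<subset> C" using XcurveD(2) CG by blast
        ultimately show False using XcurveD(3)[OF Fcurve] XcurveD(1) CG by blast
      qed
    qed
  }
  {
    assume p: "(a\<^sup>2 - b\<^sup>2) * (a\<^sup>2 - c\<^sup>2) * (b\<^sup>2 - c\<^sup>2) = 0"
    show "\<not> (\<exists>C. Xcurve a b c C \<and> Ginvariant C)"
    proof
      assume "\<exists>C. Xcurve a b c C \<and> Ginvariant C"
      then obtain C where C: "Xcurve a b c C" and G: "Ginvariant C" by blast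
      have sq: "x\<^sup>2 = y\<^sup>2 \<Longrightarrow> x = y \<or> x = - y" for x y :: complex
        by (metis power2_eq_iff)
      have "a\<^sup>2 = b\<^sup>2 \<or> a\<^sup>2 = c\<^sup>2 \<or> b\<^sup>2 = c\<^sup>2" using p by auto
      then show False
      proof (elim disjE)
        assume "b\<^sup>2 = c\<^sup>2"
        then have cb: "c = b \<or> c = -b" using sq by metis
        have b0: "b \<noteq> 0"
        proof
          assume "b = 0"
          then have "c = 0" using cb by auto
          then have "proj_eq (a, b, c) (1, 0, 0)" using nz \<open>b = 0\<close> by (intro pe_intro[of a]) auto
          then show False using assms(3) by simp
        qed
        have ab: "a\<^sup>2 \<noteq> b\<^sup>2"
        proof
          assume "a\<^sup>2 = b\<^sup>2"
          then have "a = b \<or> a = -b" using sq by metis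
          then have a0: "a \<noteq> 0" and "b = a \<or> b = -a" using b0 by auto
          then show False using H cb a0 by (metis minus_minus mult_1 mult_minus1)
        qed
        show False by (rule case_bc[OF C G cb b0 ab])
      next
        assume "a\<^sup>2 = b\<^sup>2"
        then have ab: "a = b \<or> a = -b" using sq by metis
        then show False
        proof
          assume ab: "a = b"
          have a0: "a \<noteq> 0" using nz ab proof (cases "c = 0")
            case True
            then show ?thesis using nz ab by auto
          next
            case False
            show ?thesis
            proof
              assume "a = 0"
              then have "proj_eq (a, b, c) (0, 0, 1)" using ab False by (intro pe_intro[of c]) auto
              then show False using assms(5) by simp
            qed
          qed
          show False
          proof (rule case_PR[OF C G, of 1 1])
            show "a = 1 * (b + c) / 2 + 1 * (b - c) / 2" using ab by (simp add: field_simps)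
            show "b + c \<noteq> 0" using H[of 1 "-1"] ab a0 by (auto simp: add_eq_0_iff)
            show "b - c \<noteq> 0" using H[of 1 1] ab a0 by auto
          qed simp_all
        next
          assume ab: "a = -b"
          have a0: "a \<noteq> 0"
          proof
            assume "a = 0"
            then have "b = 0" using ab by simp
            then have "c \<noteq> 0" using nz \<open>a = 0\<close> by auto
            then have "proj_eq (a, b, c) (0, 0, 1)" using \<open>a = 0\<close> \<open>b = 0\<close> by (intro pe_intro[of c]) auto
            then show False using assms(5) by simp
          qed
          show False
          proof (rule case_PR[OF C G, of "-1" "-1"])
            show "a = -1 * (b + c) / 2 + -1 * (b - c) / 2" using ab by (simp add: field_simps)
            show "b + c \<noteq> 0" using H[of "-1" 1] ab a0 by (auto simp: add_eq_0_iff)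
            show "b - c \<noteq> 0" using H[of "-1" "-1"] ab a0 by auto
          qed simp_all
        qed
      next
        assume "a\<^sup>2 = c\<^sup>2"
        then have ac: "a = c \<or> a = -c" using sq by metis
        then show False
        proof
          assume ac: "a = c"
          have a0: "a \<noteq> 0"
          proof
            assume "a = 0"
            then have "c = 0" using ac by simp
            then have "b \<noteq> 0" using nz \<open>a = 0\<close> by auto
            then have "proj_eq (a, b, c) (0, 1, 0)" using \<open>a = 0\<close> \<open>c = 0\<close> by (intro pe_intro[of b]) auto
            then show False using assms(4) by simp
          qed
          show False
          proof (rule case_PR[OF C G, of 1 "-1"])
            show "a = 1 * (b + c) / 2 + -1 * (b - c) / 2" using ac by (simp add: field_simps)
            show "b + c \<noteq> 0" using H[of "-1" 1] ac a0 by (auto simp: add_eq_0_iff)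
            show "b - c \<noteq> 0" using H[of 1 1] ac a0 by auto
          qed simp_all
        next
          assume ac: "a = -c"
          have a0: "a \<noteq> 0"
          proof
            assume "a = 0"
            then have "c = 0" using ac by simp
            then have "b \<noteq> 0" using nz \<open>a = 0\<close> by auto
            then have "proj_eq (a, b, c) (0, 1, 0)" using \<open>a = 0\<close> \<open>c = 0\<close> by (intro pe_intro[of b]) auto
            then show False using assms(4) by simp
          qed
          show False
          proof (rule case_PR[OF C G, of "-1" 1])
            show "a = -1 * (b + c) / 2 + 1 * (b - c) / 2" using ac by (simp add: field_simps)
            show "b + c \<noteq> 0" using H[of 1 "-1"] ac a0 by (auto simp: add_eq_0_iff)
            show "b - c \<noteq> 0" using H[of "-1" "-1"] ac a0 by auto
          qed simp_all
        qed
      qed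
    qed
  }
qed


end
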